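(* Let $d_1\ge d_2\ge d_3\ge 2$ be integers and let $k=d_2d_3-d_1$. If $k>1$, then $\mathbb{C}^{d_1}\otimes\mathbb{C}^{d_2}\otimes\mathbb{C}^{d_3}$ contains two SLOCC maximal states $|\Phi\rangle,|\Psi\rangle$ that are incomparable under $\le_{\mathrm{SLOCC}}$, i.e. neither $|\Phi\rangle\le_{\mathrm{SLOCC}}|\Psi\rangle$ nor $|\Psi\rangle\le_{\mathrm{SLOCC}}|\Phi\rangle$.
   Context: $|\psi\rangle\le_{\mathrm{SLOCC}}|\phi\rangle$ means $(L_1\otimes L_2\otimes L_3)|\phi\rangle=|\psi\rangle$ for some linear operators $L_i$ on $\mathbb{C}^{d_i}$. A state $|\phi\rangle$ is SLOCC maximal if for every $|\psi\rangle$ in the space, $|\phi\rangle\le_{\mathrm{SLOCC}}|\psi\rangle$ implies $|\psi\rangle\le_{\mathrm{SLOCC}}|\phi\rangle$. *)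

theory Defs
  imports "HOL-Analysis.Analysis"
begin

text \<open>Tensors in C^d1 (x) C^d2 (x) C^d3 are represented by their coefficient arrays
  (indices 0..<d_i), zero outside the index box. Linear operators on C^d are d x d
  complex matrices represented as functions nat => nat => complex (only entries with
  indices < d matter).\<close>

type_synonym tensor3 = "nat \<Rightarrow> nat \<Rightarrow> nat \<Rightarrow> complex"
type_synonym cmat = "nat \<Rightarrow> nat \<Rightarrow> complex"

definition tensor_space :: "nat \<Rightarrow> nat \<Rightarrow> nat \<Rightarrow> tensor3 set" where
  "tensor_space d1 d2 d3 =
     {\<phi>. \<forall>i j k. (d1 \<le> i \<or> d2 \<le> j \<or> d3 \<le> k) \<longrightarrow> \<phi> i j k = 0}"

definition tensor_apply :: "nat \<Rightarrow> nat \<Rightarrow> nat \<Rightarrow> cmat \<Rightarrow> cmat \<Rightarrow> cmat \<Rightarrow> tensor3 \<Rightarrow> tensor3" where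
  "tensor_apply d1 d2 d3 L1 L2 L3 \<phi> = (\<lambda>i j k.
     if i < d1 \<and> j < d2 \<and> k < d3 then
       (\<Sum>a<d1. \<Sum>b<d2. \<Sum>c<d3. L1 i a * L2 j b * L3 k c * \<phi> a b c)
     else 0)"

definition slocc_le :: "nat \<Rightarrow> nat \<Rightarrow> nat \<Rightarrow> tensor3 \<Rightarrow> tensor3 \<Rightarrow> bool" where
  "slocc_le d1 d2 d3 \<psi> \<phi> \<longleftrightarrow> (\<exists>L1 L2 L3. tensor_apply d1 d2 d3 L1 L2 L3 \<phi> = \<psi>)"

definition slocc_maximal :: "nat \<Rightarrow> nat \<Rightarrow> nat \<Rightarrow> tensor3 \<Rightarrow> bool" where
  "slocc_maximal d1 d2 d3 \<phi> \<longleftrightarrow> \<phi> \<in> tensor_space d1 d2 d3 \<and>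
     (\<forall>\<psi> \<in> tensor_space d1 d2 d3. slocc_le d1 d2 d3 \<phi> \<psi> \<longrightarrow> slocc_le d1 d2 d3 \<psi> \<phi>)"

end

theory Submission
  imports Defs "Jordan_Normal_Form.Determinant"
begin


lemma sq_inv:
  fixes L :: "nat \<Rightarrow> nat \<Rightarrow> complex"
  assumes inj: "\<forall>c. (\<forall>a<n. (\<Sum>i<n. c i * L i a) = 0) \<longrightarrow> (\<forall>i<n. c i = 0)"
  shows "\<exists>M. (\<forall>i<n. \<forall>j<n. (\<Sum>a<n. M i a * L a j) = (if i=j then 1 else 0)) \<and>
             (\<forall>i<n. \<forall>j<n. (\<Sum>a<n. L i a * M a j) = (if i=j then 1 else 0))"
proof -
  define A where "A = mat n n (\<lambda>(i,j). L i j)"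
  have A: "A \<in> carrier_mat n n" unfolding A_def by auto
  have AT: "transpose_mat A \<in> carrier_mat n n" using A by auto
  have "Determinant.det (transpose_mat A) \<noteq> 0"
  proof
    assume "Determinant.det (transpose_mat A) = 0"
    then obtain v where v: "v \<in> carrier_vec n" "v \<noteq> 0\<^sub>v n" "transpose_mat A *\<^sub>v v = 0\<^sub>v n"
      using det_0_iff_vec_prod_zero_field[OF AT] by blast
    have "\<forall>a<n. (\<Sum>i<n. (v $ i) * L i a) = 0"
    proof (intro allI impI)
      fix a assume a: "a < n"
      have "(transpose_mat A *\<^sub>v v) $ a = 0" using v(3) a by simp
      moreover have "(transpose_mat A *\<^sub>v v) $ a = (\<Sum>i<n. (v $ i) * L i a)"
        using a v(1) A unfolding A_def
        by (auto simp: mult_mat_vec_def scalar_prod_def atLeast0LessThan mult.commute intro!: sum.cong)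
      ultimately show "(\<Sum>i<n. (v $ i) * L i a) = 0" by simp
    qed
    with inj have "\<forall>i<n. v $ i = 0" by blast
    hence "v = 0\<^sub>v n" using v(1) by (intro eq_vecI) auto
    with v(2) show False by simp
  qed
  hence "Determinant.det A \<noteq> 0" using det_transpose[OF A] by simp
  from det_non_zero_imp_unit[OF A this, of "()"]
  obtain B where B: "B \<in> carrier_mat n n" "B * A = 1\<^sub>m n" "A * B = 1\<^sub>m n"
    unfolding Units_def ring_mat_def by auto
  show ?thesis
  proof (intro exI[of _ "\<lambda>i j. B $$ (i,j)"] conjI allI impI)
    fix i j assume i: "i < n" and j: "j < n"
    have "(B * A) $$ (i,j) = (\<Sum>a<n. B $$ (i,a) * L a j)"
      using i j A B(1) unfolding A_def
      by (auto simp: scalar_prod_def atLeast0LessThan intro!: sum.cong)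
    moreover have "(B * A) $$ (i,j) = (if i=j then 1 else 0)" using B(2) i j by simp
    ultimately show "(\<Sum>a<n. B $$ (i,a) * L a j) = (if i=j then 1 else 0)" by simp
    have "(A * B) $$ (i,j) = (\<Sum>a<n. L i a * B $$ (a,j))"
      using i j A B(1) unfolding A_def
      by (auto simp: scalar_prod_def atLeast0LessThan intro!: sum.cong)
    moreover have "(A * B) $$ (i,j) = (if i=j then 1 else 0)" using B(3) i j by simp
    ultimately show "(\<Sum>a<n. L i a * B $$ (a,j)) = (if i=j then 1 else 0)" by simp
  qed
qed


lemma sum_swap_mult:
  fixes c :: "'i \<Rightarrow> complex"
  shows "(\<Sum>i\<in>A. c i * (\<Sum>a\<in>B. f i a * g a)) = (\<Sum>a\<in>B. (\<Sum>i\<in>A. c i * f i a) * g a)"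
  by (simp add: sum_distrib_left sum_distrib_right mult.assoc) (rule sum.swap)

definition invm :: "nat \<Rightarrow> cmat \<Rightarrow> cmat \<Rightarrow> bool" where
  "invm n L M \<longleftrightarrow> (\<forall>i<n. \<forall>j<n. (\<Sum>a<n. M i a * L a j) = (if i=j then 1 else 0)) \<and>
                   (\<forall>i<n. \<forall>j<n. (\<Sum>a<n. L i a * M a j) = (if i=j then 1 else 0))"

lemma invm_sym: "invm n L M \<Longrightarrow> invm n M L"
  unfolding invm_def by blast

lemma sum_delta_lt: assumes "b < (n::nat)" shows "(\<Sum>b'<n. (if b' = b then 1 else 0) * (u b' :: complex)) = u b"
proof -
  have "(\<Sum>b'<n. (if b' = b then 1 else 0) * u b') = (\<Sum>b'<n. if b' = b then u b' else 0)"
    by (intro sum.cong) auto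
  also have "\<dots> = u b" using assms by (simp add: sum.delta)
  finally show ?thesis .
qed

lemma inv_h1:
  assumes "invm n L M" "b < n"
  shows "(\<Sum>j<n. L j b * (\<Sum>b'<n. M b' j * u b')) = u b"
proof -
  have "(\<Sum>j<n. L j b * (\<Sum>b'<n. M b' j * u b')) = (\<Sum>b'<n. (\<Sum>j<n. M b' j * L j b) * u b')"
    by (simp add: sum_distrib_left sum_distrib_right mult.assoc mult.left_commute) (rule sum.swap)
  also have "\<dots> = (\<Sum>b'<n. (if b' = b then 1 else 0) * u b')"
    using assms unfolding invm_def by (intro sum.cong) auto
  also have "\<dots> = u b" using assms(2) by (rule sum_delta_lt)
  finally show ?thesis .
qed

lemma inv_h2:
  assumes "invm n L M" "b < n"
  shows "(\<Sum>j<n. M b j * (\<Sum>b'<n. L j b' * u b')) = u b"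
proof -
  have "(\<Sum>j<n. M b j * (\<Sum>b'<n. L j b' * u b')) = (\<Sum>b'<n. (\<Sum>j<n. M b j * L j b') * u b')"
    by (rule sum_swap_mult)
  also have "\<dots> = (\<Sum>b'<n. (if b' = b then 1 else 0) * u b')"
    using assms unfolding invm_def by (intro sum.cong) auto
  also have "\<dots> = u b" using assms(2) by (rule sum_delta_lt)
  finally show ?thesis .
qed

definition ap1 :: "nat \<Rightarrow> cmat \<Rightarrow> tensor3 \<Rightarrow> tensor3" where
  "ap1 n L \<phi> = (\<lambda>i j k. if i < n then (\<Sum>a<n. L i a * \<phi> a j k) else 0)"
definition ap2 :: "nat \<Rightarrow> cmat \<Rightarrow> tensor3 \<Rightarrow> tensor3" where
  "ap2 n L \<phi> = (\<lambda>i j k. if j < n then (\<Sum>b<n. L j b * \<phi> i b k) else 0)"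
definition ap3 :: "nat \<Rightarrow> cmat \<Rightarrow> tensor3 \<Rightarrow> tensor3" where
  "ap3 n L \<phi> = (\<lambda>i j k. if k < n then (\<Sum>c<n. L k c * \<phi> i j c) else 0)"

lemma tensor_apply_ap:
  "tensor_apply d1 d2 d3 L1 L2 L3 \<phi> = ap1 d1 L1 (ap2 d2 L2 (ap3 d3 L3 \<phi>))"
proof (intro ext)
  fix i j k
  show "tensor_apply d1 d2 d3 L1 L2 L3 \<phi> i j k = ap1 d1 L1 (ap2 d2 L2 (ap3 d3 L3 \<phi>)) i j k"
    unfolding tensor_apply_def ap1_def ap2_def ap3_def
    by (cases "i<d1"; cases "j<d2"; cases "k<d3") (simp_all add: sum_distrib_left mult.assoc)
qed

lemma ap12: "ap1 n L (ap2 m K \<phi>) = ap2 m K (ap1 n L \<phi>)"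
  unfolding ap1_def ap2_def
  by (auto simp: sum_distrib_left mult.left_commute fun_eq_iff intro: sum.swap)
lemma ap13: "ap1 n L (ap3 m K \<phi>) = ap3 m K (ap1 n L \<phi>)"
  unfolding ap1_def ap3_def
  by (auto simp: sum_distrib_left mult.left_commute fun_eq_iff intro: sum.swap)
lemma ap23: "ap2 n L (ap3 m K \<phi>) = ap3 m K (ap2 n L \<phi>)"
  unfolding ap2_def ap3_def
  by (auto simp: sum_distrib_left mult.left_commute fun_eq_iff intro: sum.swap)

lemma ap1_cancel:
  assumes "invm n L M" "\<forall>i j k. n \<le> i \<longrightarrow> \<phi> i j k = 0"
  shows "ap1 n M (ap1 n L \<phi>) = \<phi>"
proof (intro ext)
  fix i j k
  show "ap1 n M (ap1 n L \<phi>) i j k = \<phi> i j k"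
  proof (cases "i < n")
    case True
    have "ap1 n M (ap1 n L \<phi>) i j k = (\<Sum>a<n. M i a * (\<Sum>a'<n. L a a' * \<phi> a' j k))"
      using True unfolding ap1_def by (auto intro!: sum.cong)
    also have "\<dots> = \<phi> i j k" using inv_h2[OF assms(1) True] .
    finally show ?thesis .
  qed (use assms(2) in \<open>auto simp: ap1_def\<close>)
qed

lemma ap2_cancel:
  assumes "invm n L M" "\<forall>i j k. n \<le> j \<longrightarrow> \<phi> i j k = 0"
  shows "ap2 n M (ap2 n L \<phi>) = \<phi>"
proof (intro ext)
  fix i j k
  show "ap2 n M (ap2 n L \<phi>) i j k = \<phi> i j k"
  proof (cases "j < n")
    case True
    have "ap2 n M (ap2 n L \<phi>) i j k = (\<Sum>a<n. M j a * (\<Sum>a'<n. L a a' * \<phi> i a' k))"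
      using True unfolding ap2_def by (auto intro!: sum.cong)
    also have "\<dots> = \<phi> i j k" using inv_h2[OF assms(1) True] .
    finally show ?thesis .
  qed (use assms(2) in \<open>auto simp: ap2_def\<close>)
qed

lemma ap3_cancel:
  assumes "invm n L M" "\<forall>i j k. n \<le> k \<longrightarrow> \<phi> i j k = 0"
  shows "ap3 n M (ap3 n L \<phi>) = \<phi>"
proof (intro ext)
  fix i j k
  show "ap3 n M (ap3 n L \<phi>) i j k = \<phi> i j k"
  proof (cases "k < n")
    case True
    have "ap3 n M (ap3 n L \<phi>) i j k = (\<Sum>a<n. M k a * (\<Sum>a'<n. L a a' * \<phi> i j a'))"
      using True unfolding ap3_def by (auto intro!: sum.cong)
    also have "\<dots> = \<phi> i j k" using inv_h2[OF assms(1) True] .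
    finally show ?thesis .
  qed (use assms(2) in \<open>auto simp: ap3_def\<close>)
qed

lemma ap_vanish:
  "\<forall>i j k. n \<le> i \<longrightarrow> ap1 n L \<phi> i j k = 0"
  "(\<forall>i j k. m \<le> i \<longrightarrow> \<phi> i j k = 0) \<Longrightarrow> \<forall>i j k. m \<le> i \<longrightarrow> ap2 n L \<phi> i j k = 0"
  "(\<forall>i j k. m \<le> i \<longrightarrow> \<phi> i j k = 0) \<Longrightarrow> \<forall>i j k. m \<le> i \<longrightarrow> ap3 n L \<phi> i j k = 0"
  "\<forall>i j k. n \<le> j \<longrightarrow> ap2 n L \<phi> i j k = 0"
  "(\<forall>i j k. m \<le> j \<longrightarrow> \<phi> i j k = 0) \<Longrightarrow> \<forall>i j k. m \<le> j \<longrightarrow> ap1 n L \<phi> i j k = 0"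
  "(\<forall>i j k. m \<le> j \<longrightarrow> \<phi> i j k = 0) \<Longrightarrow> \<forall>i j k. m \<le> j \<longrightarrow> ap3 n L \<phi> i j k = 0"
  "\<forall>i j k. n \<le> k \<longrightarrow> ap3 n L \<phi> i j k = 0"
  "(\<forall>i j k. m \<le> k \<longrightarrow> \<phi> i j k = 0) \<Longrightarrow> \<forall>i j k. m \<le> k \<longrightarrow> ap1 n L \<phi> i j k = 0"
  "(\<forall>i j k. m \<le> k \<longrightarrow> \<phi> i j k = 0) \<Longrightarrow> \<forall>i j k. m \<le> k \<longrightarrow> ap2 n L \<phi> i j k = 0"
  unfolding ap1_def ap2_def ap3_def by auto

lemma space_vanish:
  assumes "\<phi> \<in> tensor_space d1 d2 d3"
  shows "\<forall>i j k. d1 \<le> i \<longrightarrow> \<phi> i j k = 0" "\<forall>i j k. d2 \<le> j \<longrightarrow> \<phi> i j k = 0"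
        "\<forall>i j k. d3 \<le> k \<longrightarrow> \<phi> i j k = 0"
  using assms unfolding tensor_space_def by auto

lemma tensor_apply_cancel:
  assumes "\<phi> \<in> tensor_space d1 d2 d3" "invm d1 L1 M1" "invm d2 L2 M2" "invm d3 L3 M3"
  shows "tensor_apply d1 d2 d3 M1 M2 M3 (tensor_apply d1 d2 d3 L1 L2 L3 \<phi>) = \<phi>"
proof -
  note v = space_vanish[OF assms(1)]
  have "tensor_apply d1 d2 d3 M1 M2 M3 (tensor_apply d1 d2 d3 L1 L2 L3 \<phi>)
     = ap1 d1 M1 (ap1 d1 L1 (ap2 d2 M2 (ap2 d2 L2 (ap3 d3 M3 (ap3 d3 L3 \<phi>)))))"
    unfolding tensor_apply_ap by (simp add: ap12 ap13 ap23)
  also have "ap3 d3 M3 (ap3 d3 L3 \<phi>) = \<phi>" by (rule ap3_cancel[OF assms(4) v(3)])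
  also have "ap2 d2 M2 (ap2 d2 L2 \<phi>) = \<phi>" by (rule ap2_cancel[OF assms(3) v(2)])
  also have "ap1 d1 M1 (ap1 d1 L1 \<phi>) = \<phi>" by (rule ap1_cancel[OF assms(2) v(1)])
  finally show ?thesis .
qed


definition conc1 :: "nat \<Rightarrow> nat \<Rightarrow> nat \<Rightarrow> tensor3 \<Rightarrow> bool" where
  "conc1 d1 d2 d3 \<phi> \<longleftrightarrow> (\<forall>c. (\<forall>j<d2. \<forall>k<d3. (\<Sum>i<d1. c i * \<phi> i j k) = 0) \<longrightarrow> (\<forall>i<d1. c i = 0))"
definition conc2 :: "nat \<Rightarrow> nat \<Rightarrow> nat \<Rightarrow> tensor3 \<Rightarrow> bool" where
  "conc2 d1 d2 d3 \<phi> \<longleftrightarrow> (\<forall>c. (\<forall>i<d1. \<forall>k<d3. (\<Sum>j<d2. c j * \<phi> i j k) = 0) \<longrightarrow> (\<forall>j<d2. c j = 0))"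
definition conc3 :: "nat \<Rightarrow> nat \<Rightarrow> nat \<Rightarrow> tensor3 \<Rightarrow> bool" where
  "conc3 d1 d2 d3 \<phi> \<longleftrightarrow> (\<forall>c. (\<forall>i<d1. \<forall>j<d2. (\<Sum>k<d3. c k * \<phi> i j k) = 0) \<longrightarrow> (\<forall>k<d3. c k = 0))"
definition concise :: "nat \<Rightarrow> nat \<Rightarrow> nat \<Rightarrow> tensor3 \<Rightarrow> bool" where
  "concise d1 d2 d3 \<phi> \<longleftrightarrow> conc1 d1 d2 d3 \<phi> \<and> conc2 d1 d2 d3 \<phi> \<and> conc3 d1 d2 d3 \<phi>"

lemma conc1_inv:
  assumes "conc1 d1 d2 d3 \<phi>" "\<phi> = ap1 d1 L X"
  shows "\<exists>M. invm d1 L M"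
proof -
  have "\<forall>c. (\<forall>a<d1. (\<Sum>i<d1. c i * L i a) = 0) \<longrightarrow> (\<forall>i<d1. c i = 0)"
  proof (rule allI, rule impI)
    fix c assume H: "\<forall>a<d1. (\<Sum>i<d1. c i * L i a) = 0"
    have "\<forall>j<d2. \<forall>k<d3. (\<Sum>i<d1. c i * \<phi> i j k) = 0"
    proof (intro allI impI)
      fix j k
      have "(\<Sum>i<d1. c i * \<phi> i j k) = (\<Sum>i<d1. c i * (\<Sum>a<d1. L i a * X a j k))"
        unfolding assms(2) ap1_def by (intro sum.cong) auto
      also have "\<dots> = (\<Sum>a<d1. (\<Sum>i<d1. c i * L i a) * X a j k)" by (rule sum_swap_mult)
      also have "\<dots> = 0" using H by simp
      finally show "(\<Sum>i<d1. c i * \<phi> i j k) = 0" .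
    qed
    thus "\<forall>i<d1. c i = 0" using assms(1) unfolding conc1_def by blast
  qed
  from sq_inv[OF this] show ?thesis unfolding invm_def by blast
qed

lemma conc2_inv:
  assumes "conc2 d1 d2 d3 \<phi>" "\<phi> = ap2 d2 L X"
  shows "\<exists>M. invm d2 L M"
proof -
  have "\<forall>c. (\<forall>a<d2. (\<Sum>i<d2. c i * L i a) = 0) \<longrightarrow> (\<forall>i<d2. c i = 0)"
  proof (rule allI, rule impI)
    fix c assume H: "\<forall>a<d2. (\<Sum>i<d2. c i * L i a) = 0"
    have "\<forall>i<d1. \<forall>k<d3. (\<Sum>j<d2. c j * \<phi> i j k) = 0"
    proof (intro allI impI)
      fix i k
      have "(\<Sum>j<d2. c j * \<phi> i j k) = (\<Sum>j<d2. c j * (\<Sum>a<d2. L j a * X i a k))"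
        unfolding assms(2) ap2_def by (intro sum.cong) auto
      also have "\<dots> = (\<Sum>a<d2. (\<Sum>j<d2. c j * L j a) * X i a k)" by (rule sum_swap_mult)
      also have "\<dots> = 0" using H by simp
      finally show "(\<Sum>j<d2. c j * \<phi> i j k) = 0" .
    qed
    thus "\<forall>i<d2. c i = 0" using assms(1) unfolding conc2_def by blast
  qed
  from sq_inv[OF this] show ?thesis unfolding invm_def by blast
qed

lemma conc3_inv:
  assumes "conc3 d1 d2 d3 \<phi>" "\<phi> = ap3 d3 L X"
  shows "\<exists>M. invm d3 L M"
proof -
  have "\<forall>c. (\<forall>a<d3. (\<Sum>i<d3. c i * L i a) = 0) \<longrightarrow> (\<forall>i<d3. c i = 0)"
  proof (rule allI, rule impI)
    fix c assume H: "\<forall>a<d3. (\<Sum>i<d3. c i * L i a) = 0"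
    have "\<forall>i<d1. \<forall>j<d2. (\<Sum>k<d3. c k * \<phi> i j k) = 0"
    proof (intro allI impI)
      fix i j
      have "(\<Sum>k<d3. c k * \<phi> i j k) = (\<Sum>k<d3. c k * (\<Sum>a<d3. L k a * X i j a))"
        unfolding assms(2) ap3_def by (intro sum.cong) auto
      also have "\<dots> = (\<Sum>a<d3. (\<Sum>k<d3. c k * L k a) * X i j a)" by (rule sum_swap_mult)
      also have "\<dots> = 0" using H by simp
      finally show "(\<Sum>k<d3. c k * \<phi> i j k) = 0" .
    qed
    thus "\<forall>i<d3. c i = 0" using assms(1) unfolding conc3_def by blast
  qed
  from sq_inv[OF this] show ?thesis unfolding invm_def by blast
qed

lemma concise_inv:
  assumes "concise d1 d2 d3 \<phi>" "\<phi> = tensor_apply d1 d2 d3 L1 L2 L3 \<psi>"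
  shows "\<exists>M1 M2 M3. invm d1 L1 M1 \<and> invm d2 L2 M2 \<and> invm d3 L3 M3"
proof -
  have e1: "\<phi> = ap1 d1 L1 (ap2 d2 L2 (ap3 d3 L3 \<psi>))" using assms(2) tensor_apply_ap by simp
  have e2: "\<phi> = ap2 d2 L2 (ap1 d1 L1 (ap3 d3 L3 \<psi>))" using e1 ap12 by simp
  have e3: "\<phi> = ap3 d3 L3 (ap1 d1 L1 (ap2 d2 L2 \<psi>))" using e1 ap13 ap23 by simp
  from assms(1) have c: "conc1 d1 d2 d3 \<phi>" "conc2 d1 d2 d3 \<phi>" "conc3 d1 d2 d3 \<phi>"
    unfolding concise_def by auto
  obtain M1 where "invm d1 L1 M1" using conc1_inv[OF c(1) e1] by blast
  moreover obtain M2 where "invm d2 L2 M2" using conc2_inv[OF c(2) e2] by blast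
  moreover obtain M3 where "invm d3 L3 M3" using conc3_inv[OF c(3) e3] by blast
  ultimately show ?thesis by blast
qed

lemma concise_nonzero:
  assumes "concise d1 d2 d3 \<phi>" "0 < d1"
  shows "\<phi> \<noteq> (\<lambda>_ _ _. 0)"
proof
  assume z: "\<phi> = (\<lambda>_ _ _. 0)"
  from assms(1) have c1: "conc1 d1 d2 d3 \<phi>" unfolding concise_def by simp
  have "\<forall>j<d2. \<forall>k<d3. (\<Sum>i<d1. (\<lambda>_. 1::complex) i * \<phi> i j k) = 0" using z by simp
  moreover from c1 have "(\<forall>j<d2. \<forall>k<d3. (\<Sum>i<d1. (\<lambda>_. 1::complex) i * \<phi> i j k) = 0) \<longrightarrow> (\<forall>i<d1. (\<lambda>_. 1::complex) i = 0)"
    unfolding conc1_def by (rule spec)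
  ultimately have "\<forall>i<d1. (\<lambda>_. 1::complex) i = 0" by blast
  with assms(2) show False by auto
qed

lemma generic:
  fixes I :: "tensor3 \<Rightarrow> bool"
  assumes d: "0 < d1"
    and spP: "\<Phi> \<in> tensor_space d1 d2 d3" and spQ: "\<Psi> \<in> tensor_space d1 d2 d3"
    and cP: "concise d1 d2 d3 \<Phi>" and cQ: "concise d1 d2 d3 \<Psi>"
    and IQ: "I \<Psi>" and nIP: "\<not> I \<Phi>"
    and t1: "\<And>\<phi> L M. I \<phi> \<Longrightarrow> invm d1 L M \<Longrightarrow> I (ap1 d1 L \<phi>)"
    and t2: "\<And>\<phi> L M. I \<phi> \<Longrightarrow> invm d2 L M \<Longrightarrow> I (ap2 d2 L \<phi>)"
    and t3: "\<And>\<phi> L M. I \<phi> \<Longrightarrow> invm d3 L M \<Longrightarrow> I (ap3 d3 L \<phi>)"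
  shows "\<exists>\<Phi> \<Psi>. \<Phi> \<in> tensor_space d1 d2 d3 \<and> \<Psi> \<in> tensor_space d1 d2 d3 \<and>
           \<Phi> \<noteq> (\<lambda>_ _ _. 0) \<and> \<Psi> \<noteq> (\<lambda>_ _ _. 0) \<and>
           slocc_maximal d1 d2 d3 \<Phi> \<and> slocc_maximal d1 d2 d3 \<Psi> \<and>
           \<not> slocc_le d1 d2 d3 \<Phi> \<Psi> \<and> \<not> slocc_le d1 d2 d3 \<Psi> \<Phi>"
proof -
  have tr: "I (tensor_apply d1 d2 d3 L1 L2 L3 \<phi>)"
    if "I \<phi>" "invm d1 L1 M1" "invm d2 L2 M2" "invm d3 L3 M3" for \<phi> L1 L2 L3 M1 M2 M3
    unfolding tensor_apply_ap by (rule t1[OF t2[OF t3[OF that(1) that(4)] that(3)] that(2)])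
  have maxi: "slocc_maximal d1 d2 d3 \<phi>" if sp: "\<phi> \<in> tensor_space d1 d2 d3" and c: "concise d1 d2 d3 \<phi>" for \<phi>
    unfolding slocc_maximal_def
  proof (intro conjI ballI impI sp)
    fix \<psi> assume "\<psi> \<in> tensor_space d1 d2 d3" and "slocc_le d1 d2 d3 \<phi> \<psi>"
    then obtain L1 L2 L3 where e: "tensor_apply d1 d2 d3 L1 L2 L3 \<psi> = \<phi>" and sp\<psi>: "\<psi> \<in> tensor_space d1 d2 d3"
      unfolding slocc_le_def by blast
    obtain M1 M2 M3 where m: "invm d1 L1 M1" "invm d2 L2 M2" "invm d3 L3 M3"
      using concise_inv[OF c e[symmetric]] by blast
    have "tensor_apply d1 d2 d3 M1 M2 M3 \<phi> = \<psi>"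
      using tensor_apply_cancel[OF sp\<psi> m] e by simp
    thus "slocc_le d1 d2 d3 \<psi> \<phi>" unfolding slocc_le_def by blast
  qed
  have n1: "\<not> slocc_le d1 d2 d3 \<Phi> \<Psi>"
  proof
    assume "slocc_le d1 d2 d3 \<Phi> \<Psi>"
    then obtain L1 L2 L3 where e: "tensor_apply d1 d2 d3 L1 L2 L3 \<Psi> = \<Phi>"
      unfolding slocc_le_def by blast
    obtain M1 M2 M3 where m: "invm d1 L1 M1" "invm d2 L2 M2" "invm d3 L3 M3"
      using concise_inv[OF cP e[symmetric]] by blast
    from tr[OF IQ m] e nIP show False by simp
  qed
  have n2: "\<not> slocc_le d1 d2 d3 \<Psi> \<Phi>"
  proof
    assume "slocc_le d1 d2 d3 \<Psi> \<Phi>"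
    then obtain L1 L2 L3 where e: "tensor_apply d1 d2 d3 L1 L2 L3 \<Phi> = \<Psi>"
      unfolding slocc_le_def by blast
    obtain M1 M2 M3 where m: "invm d1 L1 M1" "invm d2 L2 M2" "invm d3 L3 M3"
      using concise_inv[OF cQ e[symmetric]] by blast
    have "tensor_apply d1 d2 d3 M1 M2 M3 \<Psi> = \<Phi>"
      using tensor_apply_cancel[OF spP m] e by simp
    moreover have "I (tensor_apply d1 d2 d3 M1 M2 M3 \<Psi>)"
      using tr[OF IQ invm_sym[OF m(1)] invm_sym[OF m(2)] invm_sym[OF m(3)]] .
    ultimately show False using nIP by simp
  qed
  show ?thesis
    apply (rule exI[of _ \<Phi>], rule exI[of _ \<Psi>])
    using spP spQ concise_nonzero[OF cP d] concise_nonzero[OF cQ d] maxi[OF spP cP] maxi[OF spQ cQ] n1 n2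
    by simp
qed



lemma mv_swap:
  fixes L :: "nat \<Rightarrow> nat \<Rightarrow> complex"
  shows "(\<Sum>j\<in>J. (\<Sum>b\<in>B. L j b * Y b) * x j) = (\<Sum>b\<in>B. Y b * (\<Sum>j\<in>J. L j b * x j))"
  by (simp add: sum_distrib_left sum_distrib_right ac_simps) (rule sum.swap)

lemma s_inner: "(\<Sum>x\<in>X. \<Sum>y\<in>Y. \<Sum>z\<in>Z. f x y z) = (\<Sum>x\<in>X. \<Sum>z\<in>Z. \<Sum>y\<in>Y. f x y z)"
  by (rule sum.cong[OF refl]) (rule sum.swap)

definition con23 :: "nat \<Rightarrow> nat \<Rightarrow> tensor3 \<Rightarrow> (nat \<Rightarrow> complex) \<Rightarrow> (nat \<Rightarrow> complex) \<Rightarrow> nat \<Rightarrow> complex" where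
  "con23 d2 d3 \<phi> u v i = (\<Sum>j<d2. \<Sum>k<d3. \<phi> i j k * u j * v k)"

lemma con23_ap1:
  assumes "i < d1"
  shows "con23 d2 d3 (ap1 d1 L \<phi>) u v i = (\<Sum>a<d1. L i a * con23 d2 d3 \<phi> u v a)"
proof -
  have "con23 d2 d3 (ap1 d1 L \<phi>) u v i = (\<Sum>j<d2. \<Sum>k<d3. (\<Sum>a<d1. L i a * \<phi> a j k) * u j * v k)"
    using assms unfolding con23_def ap1_def by simp
  also have "\<dots> = (\<Sum>j<d2. \<Sum>k<d3. \<Sum>a<d1. L i a * (\<phi> a j k * u j * v k))"
    by (simp add: sum_distrib_left sum_distrib_right ac_simps)
  also have "\<dots> = (\<Sum>j<d2. \<Sum>a<d1. \<Sum>k<d3. L i a * (\<phi> a j k * u j * v k))" by (rule s_inner)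
  also have "\<dots> = (\<Sum>a<d1. \<Sum>j<d2. \<Sum>k<d3. L i a * (\<phi> a j k * u j * v k))" by (rule sum.swap)
  also have "\<dots> = (\<Sum>a<d1. L i a * con23 d2 d3 \<phi> u v a)"
    unfolding con23_def by (simp add: sum_distrib_left)
  finally show ?thesis .
qed

lemma con23_ap2:
  "con23 d2 d3 (ap2 d2 L \<phi>) x v i = con23 d2 d3 \<phi> (\<lambda>b. \<Sum>j<d2. L j b * x j) v i"
proof -
  have "con23 d2 d3 (ap2 d2 L \<phi>) x v i = (\<Sum>j<d2. \<Sum>k<d3. (\<Sum>b<d2. L j b * \<phi> i b k) * x j * v k)"
    unfolding con23_def ap2_def by (intro sum.cong) auto
  also have "\<dots> = (\<Sum>j<d2. \<Sum>k<d3. \<Sum>b<d2. (L j b * x j) * (\<phi> i b k * v k))"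
    by (simp add: sum_distrib_left sum_distrib_right ac_simps)
  also have "\<dots> = (\<Sum>j<d2. \<Sum>b<d2. \<Sum>k<d3. (L j b * x j) * (\<phi> i b k * v k))" by (rule s_inner)
  also have "\<dots> = (\<Sum>b<d2. \<Sum>j<d2. \<Sum>k<d3. (L j b * x j) * (\<phi> i b k * v k))" by (rule sum.swap)
  also have "\<dots> = (\<Sum>b<d2. \<Sum>k<d3. \<Sum>j<d2. (L j b * x j) * (\<phi> i b k * v k))" by (rule s_inner)
  also have "\<dots> = con23 d2 d3 \<phi> (\<lambda>b. \<Sum>j<d2. L j b * x j) v i"
    unfolding con23_def by (simp add: sum_distrib_left sum_distrib_right ac_simps)
  finally show ?thesis .
qed

lemma con23_ap3:
  "con23 d2 d3 (ap3 d3 L \<phi>) u y i = con23 d2 d3 \<phi> u (\<lambda>c. \<Sum>k<d3. L k c * y k) i"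
proof -
  have "con23 d2 d3 (ap3 d3 L \<phi>) u y i = (\<Sum>j<d2. \<Sum>k<d3. (\<Sum>c<d3. L k c * \<phi> i j c) * u j * y k)"
    unfolding con23_def ap3_def by (intro sum.cong) auto
  also have "\<dots> = (\<Sum>j<d2. \<Sum>k<d3. \<Sum>c<d3. (L k c * y k) * (\<phi> i j c * u j))"
    by (simp add: sum_distrib_left sum_distrib_right ac_simps)
  also have "\<dots> = (\<Sum>j<d2. \<Sum>c<d3. \<Sum>k<d3. (L k c * y k) * (\<phi> i j c * u j))"
    by (rule sum.cong[OF refl], rule sum.swap)
  also have "\<dots> = con23 d2 d3 \<phi> u (\<lambda>c. \<Sum>k<d3. L k c * y k) i"
    unfolding con23_def by (simp add: sum_distrib_left sum_distrib_right ac_simps)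
  finally show ?thesis .
qed

definition con1 :: "nat \<Rightarrow> tensor3 \<Rightarrow> (nat \<Rightarrow> complex) \<Rightarrow> nat \<Rightarrow> nat \<Rightarrow> complex" where
  "con1 d1 \<phi> c j k = (\<Sum>i<d1. c i * \<phi> i j k)"

lemma con1_ap1:
  "con1 d1 (ap1 d1 L \<phi>) c j k = con1 d1 \<phi> (\<lambda>a. \<Sum>i<d1. c i * L i a) j k"
proof -
  have "con1 d1 (ap1 d1 L \<phi>) c j k = (\<Sum>i<d1. c i * (\<Sum>a<d1. L i a * \<phi> a j k))"
    unfolding con1_def ap1_def by (intro sum.cong) auto
  also have "\<dots> = (\<Sum>a<d1. (\<Sum>i<d1. c i * L i a) * \<phi> a j k)" by (rule sum_swap_mult)
  finally show ?thesis unfolding con1_def .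
qed

lemma con1_ap2:
  assumes "j < d2"
  shows "con1 d1 (ap2 d2 L \<phi>) c j k = (\<Sum>b<d2. L j b * con1 d1 \<phi> c b k)"
  using assms unfolding con1_def ap2_def
  by (simp add: sum_distrib_left ac_simps) (rule sum.swap)

lemma con1_ap3:
  assumes "k < d3"
  shows "con1 d1 (ap3 d3 L \<phi>) c j k = (\<Sum>b<d3. L k b * con1 d1 \<phi> c j b)"
  using assms unfolding con1_def ap3_def
  by (simp add: sum_distrib_left ac_simps) (rule sum.swap)

definition con3 :: "nat \<Rightarrow> tensor3 \<Rightarrow> (nat \<Rightarrow> complex) \<Rightarrow> nat \<Rightarrow> nat \<Rightarrow> complex" where
  "con3 d3 \<phi> v i j = (\<Sum>k<d3. \<phi> i j k * v k)"

lemma con3_ap1: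
  assumes "i < d1"
  shows "con3 d3 (ap1 d1 L \<phi>) v i j = (\<Sum>a<d1. L i a * con3 d3 \<phi> v a j)"
  using assms unfolding con3_def ap1_def
  by (simp add: sum_distrib_left sum_distrib_right ac_simps) (rule sum.swap)

lemma con3_ap2:
  assumes "j < d2"
  shows "con3 d3 (ap2 d2 L \<phi>) v i j = (\<Sum>a<d2. L j a * con3 d3 \<phi> v i a)"
  using assms unfolding con3_def ap2_def
  by (simp add: sum_distrib_left sum_distrib_right ac_simps) (rule sum.swap)

lemma con3_ap3:
  "con3 d3 (ap3 d3 L \<phi>) y i j = con3 d3 \<phi> (\<lambda>c. \<Sum>k<d3. L k c * y k) i j"
proof -
  have "con3 d3 (ap3 d3 L \<phi>) y i j = (\<Sum>k<d3. (\<Sum>c<d3. L k c * \<phi> i j c) * y k)"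
    unfolding con3_def ap3_def by (intro sum.cong) auto
  also have "\<dots> = (\<Sum>c<d3. \<phi> i j c * (\<Sum>k<d3. L k c * y k))" by (rule mv_swap)
  finally show ?thesis unfolding con3_def .
qed


definition nz :: "nat \<Rightarrow> (nat \<Rightarrow> complex) \<Rightarrow> bool" where
  "nz n u \<longleftrightarrow> (\<exists>j<n. u j \<noteq> 0)"

lemma nz_L:
  assumes "invm n L M" "nz n u"
  shows "nz n (\<lambda>j. \<Sum>b<n. L j b * u b)"
proof (rule ccontr)
  assume "\<not> ?thesis"
  hence z: "\<forall>j<n. (\<Sum>b<n. L j b * u b) = 0" unfolding nz_def by auto
  from assms(2) obtain b where b: "b < n" "u b \<noteq> 0" unfolding nz_def by auto
  have "u b = (\<Sum>j<n. M b j * (\<Sum>b'<n. L j b' * u b'))" using inv_h2[OF assms(1) b(1)] by simp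
  also have "\<dots> = 0" using z by simp
  finally show False using b by simp
qed

lemma nz_MT:
  assumes "invm n L M" "nz n u"
  shows "nz n (\<lambda>j. \<Sum>b'<n. M b' j * u b')"
proof (rule ccontr)
  assume "\<not> ?thesis"
  hence z: "\<forall>j<n. (\<Sum>b'<n. M b' j * u b') = 0" unfolding nz_def by auto
  from assms(2) obtain b where b: "b < n" "u b \<noteq> 0" unfolding nz_def by auto
  have "u b = (\<Sum>j<n. L j b * (\<Sum>b'<n. M b' j * u b'))" using inv_h1[OF assms(1) b(1)] by simp
  also have "\<dots> = 0" using z by simp
  finally show False using b by simp
qed

lemma con23_cong:
  assumes "\<forall>j<d2. u j = u' j" "\<forall>k<d3. v k = v' k"
  shows "con23 d2 d3 \<phi> u v i = con23 d2 d3 \<phi> u' v' i"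
  using assms unfolding con23_def by (intro sum.cong) auto

lemma con1_cong:
  assumes "\<forall>i<d1. c i = c' i"
  shows "con1 d1 \<phi> c j k = con1 d1 \<phi> c' j k"
  using assms unfolding con1_def by (intro sum.cong) auto

lemma con3_cong:
  assumes "\<forall>k<d3. v k = v' k"
  shows "con3 d3 \<phi> v i j = con3 d3 \<phi> v' i j"
  using assms unfolding con3_def by (intro sum.cong) auto

lemma inv_h1': "invm n L M \<Longrightarrow> b < n \<Longrightarrow> (\<Sum>j<n. L j b * (\<Sum>b'<n. M b' j * u b')) = u b"
  by (rule inv_h1)

definition PU :: "nat \<Rightarrow> nat \<Rightarrow> nat \<Rightarrow> tensor3 \<Rightarrow> bool" where
  "PU d1 d2 d3 \<phi> \<longleftrightarrow> (\<exists>u v. nz d2 u \<and> nz d3 v \<and> (\<forall>i<d1. con23 d2 d3 \<phi> u v i = 0))"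

lemma PU_t1:
  assumes "PU d1 d2 d3 \<phi>"
  shows "PU d1 d2 d3 (ap1 d1 L \<phi>)"
proof -
  obtain u v where uv: "nz d2 u" "nz d3 v" "\<forall>i<d1. con23 d2 d3 \<phi> u v i = 0"
    using assms(1) unfolding PU_def by blast
  have "\<forall>i<d1. con23 d2 d3 (ap1 d1 L \<phi>) u v i = 0"
    using uv(3) by (simp add: con23_ap1)
  thus ?thesis using uv(1,2) unfolding PU_def by blast
qed

lemma PU_t2:
  assumes "PU d1 d2 d3 \<phi>" "invm d2 L M"
  shows "PU d1 d2 d3 (ap2 d2 L \<phi>)"
proof -
  obtain u v where uv: "nz d2 u" "nz d3 v" "\<forall>i<d1. con23 d2 d3 \<phi> u v i = 0"
    using assms(1) unfolding PU_def by blast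
  define x where "x = (\<lambda>j. \<Sum>b'<d2. M b' j * u b')"
  have "\<forall>i<d1. con23 d2 d3 (ap2 d2 L \<phi>) x v i = 0"
  proof (intro allI impI)
    fix i assume i: "i < d1"
    have "con23 d2 d3 (ap2 d2 L \<phi>) x v i = con23 d2 d3 \<phi> (\<lambda>b. \<Sum>j<d2. L j b * x j) v i"
      by (rule con23_ap2)
    also have "\<dots> = con23 d2 d3 \<phi> u v i"
      by (rule con23_cong) (auto simp: x_def inv_h1[OF assms(2)])
    finally show "con23 d2 d3 (ap2 d2 L \<phi>) x v i = 0" using uv(3) i by simp
  qed
  moreover have "nz d2 x" unfolding x_def by (rule nz_MT[OF assms(2) uv(1)])
  ultimately show ?thesis using uv(2) unfolding PU_def by blast
qed

lemma PU_t3: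
  assumes "PU d1 d2 d3 \<phi>" "invm d3 L M"
  shows "PU d1 d2 d3 (ap3 d3 L \<phi>)"
proof -
  obtain u v where uv: "nz d2 u" "nz d3 v" "\<forall>i<d1. con23 d2 d3 \<phi> u v i = 0"
    using assms(1) unfolding PU_def by blast
  define y where "y = (\<lambda>j. \<Sum>b'<d3. M b' j * v b')"
  have "\<forall>i<d1. con23 d2 d3 (ap3 d3 L \<phi>) u y i = 0"
  proof (intro allI impI)
    fix i assume i: "i < d1"
    have "con23 d2 d3 (ap3 d3 L \<phi>) u y i = con23 d2 d3 \<phi> u (\<lambda>c. \<Sum>k<d3. L k c * y k) i"
      by (rule con23_ap3)
    also have "\<dots> = con23 d2 d3 \<phi> u v i"
      by (rule con23_cong) (auto simp: y_def inv_h1[OF assms(2)])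
    finally show "con23 d2 d3 (ap3 d3 L \<phi>) u y i = 0" using uv(3) i by simp
  qed
  moreover have "nz d3 y" unfolding y_def by (rule nz_MT[OF assms(2) uv(2)])
  ultimately show ?thesis using uv(1) unfolding PU_def by blast
qed

definition PW :: "nat \<Rightarrow> nat \<Rightarrow> nat \<Rightarrow> tensor3 \<Rightarrow> bool" where
  "PW d1 d2 d3 \<phi> \<longleftrightarrow> (\<exists>c u v. nz d2 u \<and> nz d3 v \<and> (\<forall>j<d2. \<forall>k<d3. con1 d1 \<phi> c j k = u j * v k))"

lemma PW_t1:
  assumes "PW d1 d2 d3 \<phi>" "invm d1 L M"
  shows "PW d1 d2 d3 (ap1 d1 L \<phi>)"
proof -
  obtain c u v where uv: "nz d2 u" "nz d3 v" "\<forall>j<d2. \<forall>k<d3. con1 d1 \<phi> c j k = u j * v k"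
    using assms(1) unfolding PW_def by blast
  define c' where "c' = (\<lambda>i. \<Sum>a<d1. M a i * c a)"
  have "\<forall>j<d2. \<forall>k<d3. con1 d1 (ap1 d1 L \<phi>) c' j k = u j * v k"
  proof (intro allI impI)
    fix j k assume jk: "j < d2" "k < d3"
    have "con1 d1 (ap1 d1 L \<phi>) c' j k = con1 d1 \<phi> (\<lambda>a. \<Sum>i<d1. c' i * L i a) j k"
      by (rule con1_ap1)
    also have "\<dots> = con1 d1 \<phi> c j k"
    proof (rule con1_cong, intro allI impI)
      fix a assume a: "a < d1"
      have "(\<Sum>i<d1. c' i * L i a) = (\<Sum>i<d1. L i a * (\<Sum>b'<d1. M b' i * c b'))"
        unfolding c'_def by (simp add: mult.commute)
      also have "\<dots> = c a" by (rule inv_h1[OF assms(2) a])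
      finally show "(\<Sum>i<d1. c' i * L i a) = c a" .
    qed
    finally show "con1 d1 (ap1 d1 L \<phi>) c' j k = u j * v k" using uv(3) jk by simp
  qed
  thus ?thesis using uv(1,2) unfolding PW_def by blast
qed

lemma PW_t2:
  assumes "PW d1 d2 d3 \<phi>" "invm d2 L M"
  shows "PW d1 d2 d3 (ap2 d2 L \<phi>)"
proof -
  obtain c u v where uv: "nz d2 u" "nz d3 v" "\<forall>j<d2. \<forall>k<d3. con1 d1 \<phi> c j k = u j * v k"
    using assms(1) unfolding PW_def by blast
  define u' where "u' = (\<lambda>j. \<Sum>b<d2. L j b * u b)"
  have "\<forall>j<d2. \<forall>k<d3. con1 d1 (ap2 d2 L \<phi>) c j k = u' j * v k"
  proof (intro allI impI)
    fix j k assume jk: "j < d2" "k < d3"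
    have "con1 d1 (ap2 d2 L \<phi>) c j k = (\<Sum>b<d2. L j b * con1 d1 \<phi> c b k)"
      by (rule con1_ap2[OF jk(1)])
    also have "\<dots> = (\<Sum>b<d2. L j b * (u b * v k))" using uv(3) jk by (intro sum.cong) auto
    also have "\<dots> = u' j * v k" unfolding u'_def sum_distrib_right by (rule sum.cong) (simp_all add: ac_simps)
    finally show "con1 d1 (ap2 d2 L \<phi>) c j k = u' j * v k" .
  qed
  moreover have "nz d2 u'" unfolding u'_def by (rule nz_L[OF assms(2) uv(1)])
  ultimately show ?thesis using uv(2) unfolding PW_def by blast
qed

lemma PW_t3:
  assumes "PW d1 d2 d3 \<phi>" "invm d3 L M"
  shows "PW d1 d2 d3 (ap3 d3 L \<phi>)"
proof -
  obtain c u v where uv: "nz d2 u" "nz d3 v" "\<forall>j<d2. \<forall>k<d3. con1 d1 \<phi> c j k = u j * v k"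
    using assms(1) unfolding PW_def by blast
  define v' where "v' = (\<lambda>j. \<Sum>b<d3. L j b * v b)"
  have "\<forall>j<d2. \<forall>k<d3. con1 d1 (ap3 d3 L \<phi>) c j k = u j * v' k"
  proof (intro allI impI)
    fix j k assume jk: "j < d2" "k < d3"
    have "con1 d1 (ap3 d3 L \<phi>) c j k = (\<Sum>b<d3. L k b * con1 d1 \<phi> c j b)"
      by (rule con1_ap3[OF jk(2)])
    also have "\<dots> = (\<Sum>b<d3. L k b * (u j * v b))" using uv(3) jk by (intro sum.cong) auto
    also have "\<dots> = u j * v' k" unfolding v'_def by (simp add: sum_distrib_left ac_simps)
    finally show "con1 d1 (ap3 d3 L \<phi>) c j k = u j * v' k" .
  qed
  moreover have "nz d3 v'" unfolding v'_def by (rule nz_L[OF assms(2) uv(2)])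
  ultimately show ?thesis using uv(1) unfolding PW_def by blast
qed

definition rk1 :: "nat \<Rightarrow> nat \<Rightarrow> nat \<Rightarrow> tensor3 \<Rightarrow> (nat \<Rightarrow> complex) \<Rightarrow> (nat \<Rightarrow> complex) \<Rightarrow> (nat \<Rightarrow> complex) \<Rightarrow> bool" where
  "rk1 d1 d2 d3 \<phi> v a b \<longleftrightarrow> (\<forall>i<d1. \<forall>j<d2. con3 d3 \<phi> v i j = a i * b j)"

lemma rk1_t1:
  assumes "rk1 d1 d2 d3 \<phi> v a b"
  shows "rk1 d1 d2 d3 (ap1 d1 L \<phi>) v (\<lambda>i. \<Sum>a'<d1. L i a' * a a') b"
  unfolding rk1_def
proof (intro allI impI)
  fix i j assume ij: "i < d1" "j < d2"
  have "con3 d3 (ap1 d1 L \<phi>) v i j = (\<Sum>a'<d1. L i a' * con3 d3 \<phi> v a' j)" by (rule con3_ap1[OF ij(1)])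
  also have "\<dots> = (\<Sum>a'<d1. L i a' * (a a' * b j))" using assms ij unfolding rk1_def by (intro sum.cong) auto
  also have "\<dots> = (\<Sum>a'<d1. L i a' * a a') * b j" unfolding sum_distrib_right by (rule sum.cong) (simp_all add: ac_simps)
  finally show "con3 d3 (ap1 d1 L \<phi>) v i j = (\<Sum>a'<d1. L i a' * a a') * b j" .
qed

lemma rk1_t2:
  assumes "rk1 d1 d2 d3 \<phi> v a b"
  shows "rk1 d1 d2 d3 (ap2 d2 L \<phi>) v a (\<lambda>j. \<Sum>b'<d2. L j b' * b b')"
  unfolding rk1_def
proof (intro allI impI)
  fix i j assume ij: "i < d1" "j < d2"
  have "con3 d3 (ap2 d2 L \<phi>) v i j = (\<Sum>b'<d2. L j b' * con3 d3 \<phi> v i b')" by (rule con3_ap2[OF ij(2)])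
  also have "\<dots> = (\<Sum>b'<d2. L j b' * (a i * b b'))" using assms ij unfolding rk1_def by (intro sum.cong) auto
  also have "\<dots> = a i * (\<Sum>b'<d2. L j b' * b b')" by (simp add: sum_distrib_left ac_simps)
  finally show "con3 d3 (ap2 d2 L \<phi>) v i j = a i * (\<Sum>b'<d2. L j b' * b b')" .
qed

lemma rk1_t3:
  assumes "rk1 d1 d2 d3 \<phi> v a b" "invm d3 L M"
  shows "rk1 d1 d2 d3 (ap3 d3 L \<phi>) (\<lambda>j. \<Sum>b'<d3. M b' j * v b') a b"
  unfolding rk1_def
proof (intro allI impI)
  fix i j assume ij: "i < d1" "j < d2"
  have "con3 d3 (ap3 d3 L \<phi>) (\<lambda>j. \<Sum>b'<d3. M b' j * v b') i j
      = con3 d3 \<phi> (\<lambda>c. \<Sum>k<d3. L k c * (\<Sum>b'<d3. M b' k * v b')) i j" by (rule con3_ap3)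
  also have "\<dots> = con3 d3 \<phi> v i j" by (rule con3_cong) (auto simp: inv_h1[OF assms(2)])
  finally show "con3 d3 (ap3 d3 L \<phi>) (\<lambda>j. \<Sum>b'<d3. M b' j * v b') i j = a i * b j"
    using assms(1) ij unfolding rk1_def by simp
qed

definition P3 :: "nat \<Rightarrow> nat \<Rightarrow> nat \<Rightarrow> tensor3 \<Rightarrow> bool" where
  "P3 d1 d2 d3 \<phi> \<longleftrightarrow> (\<exists>v a b. nz d1 a \<and> nz d2 b \<and> rk1 d1 d2 d3 \<phi> v a b)"

lemma P3_t1: assumes "P3 d1 d2 d3 \<phi>" "invm d1 L M" shows "P3 d1 d2 d3 (ap1 d1 L \<phi>)"
proof -
  obtain v a b where h: "nz d1 a" "nz d2 b" "rk1 d1 d2 d3 \<phi> v a b" using assms(1) unfolding P3_def by blast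
  show ?thesis unfolding P3_def using nz_L[OF assms(2) h(1)] h(2) rk1_t1[OF h(3)] by blast
qed
lemma P3_t2: assumes "P3 d1 d2 d3 \<phi>" "invm d2 L M" shows "P3 d1 d2 d3 (ap2 d2 L \<phi>)"
proof -
  obtain v a b where h: "nz d1 a" "nz d2 b" "rk1 d1 d2 d3 \<phi> v a b" using assms(1) unfolding P3_def by blast
  show ?thesis unfolding P3_def using nz_L[OF assms(2) h(2)] h(1) rk1_t2[OF h(3)] by blast
qed
lemma P3_t3: assumes "P3 d1 d2 d3 \<phi>" "invm d3 L M" shows "P3 d1 d2 d3 (ap3 d3 L \<phi>)"
proof -
  obtain v a b where h: "nz d1 a" "nz d2 b" "rk1 d1 d2 d3 \<phi> v a b" using assms(1) unfolding P3_def by blast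
  show ?thesis unfolding P3_def using h(1,2) rk1_t3[OF h(3) assms(2)] by blast
qed

definition indep :: "nat \<Rightarrow> (nat \<Rightarrow> complex) \<Rightarrow> (nat \<Rightarrow> complex) \<Rightarrow> bool" where
  "indep n a a' \<longleftrightarrow> (\<forall>\<alpha> \<beta>. (\<forall>i<n. \<alpha> * a i + \<beta> * a' i = 0) \<longrightarrow> \<alpha> = 0 \<and> \<beta> = 0)"

lemma indep_L:
  assumes "invm n L M" "indep n a a'"
  shows "indep n (\<lambda>i. \<Sum>b<n. L i b * a b) (\<lambda>i. \<Sum>b<n. L i b * a' b)"
  unfolding indep_def
proof (intro allI impI)
  fix \<alpha> \<beta> assume H: "\<forall>i<n. \<alpha> * (\<Sum>b<n. L i b * a b) + \<beta> * (\<Sum>b<n. L i b * a' b) = 0"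
  have "\<forall>i<n. \<alpha> * a i + \<beta> * a' i = 0"
  proof (intro allI impI)
    fix i assume i: "i < n"
    have "\<alpha> * a i + \<beta> * a' i = (\<Sum>j<n. M i j * (\<Sum>b<n. L j b * (\<alpha> * a b + \<beta> * a' b)))"
      using inv_h2[OF assms(1) i, of "\<lambda>b. \<alpha> * a b + \<beta> * a' b"] by simp
    also have "\<dots> = (\<Sum>j<n. M i j * (\<alpha> * (\<Sum>b<n. L j b * a b) + \<beta> * (\<Sum>b<n. L j b * a' b)))"
      by (intro sum.cong refl) (simp add: sum.distrib sum_distrib_left algebra_simps)
    also have "\<dots> = 0" using H by simp
    finally show "\<alpha> * a i + \<beta> * a' i = 0" .
  qed
  thus "\<alpha> = 0 \<and> \<beta> = 0" using assms(2) unfolding indep_def by blast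
qed

definition Q2 :: "nat \<Rightarrow> nat \<Rightarrow> nat \<Rightarrow> tensor3 \<Rightarrow> bool" where
  "Q2 d1 d2 d3 \<phi> \<longleftrightarrow> (\<exists>v a b v' a' b'. nz d2 b \<and> nz d2 b' \<and> indep d1 a a' \<and>
      rk1 d1 d2 d3 \<phi> v a b \<and> rk1 d1 d2 d3 \<phi> v' a' b')"

lemma Q2_t1: assumes "Q2 d1 d2 d3 \<phi>" "invm d1 L M" shows "Q2 d1 d2 d3 (ap1 d1 L \<phi>)"
proof -
  obtain v a b v' a' b' where h: "nz d2 b" "nz d2 b'" "indep d1 a a'" "rk1 d1 d2 d3 \<phi> v a b" "rk1 d1 d2 d3 \<phi> v' a' b'"
    using assms(1) unfolding Q2_def by blast
  show ?thesis unfolding Q2_def using h(1,2) indep_L[OF assms(2) h(3)] rk1_t1[OF h(4)] rk1_t1[OF h(5)] by blast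
qed
lemma Q2_t2: assumes "Q2 d1 d2 d3 \<phi>" "invm d2 L M" shows "Q2 d1 d2 d3 (ap2 d2 L \<phi>)"
proof -
  obtain v a b v' a' b' where h: "nz d2 b" "nz d2 b'" "indep d1 a a'" "rk1 d1 d2 d3 \<phi> v a b" "rk1 d1 d2 d3 \<phi> v' a' b'"
    using assms(1) unfolding Q2_def by blast
  show ?thesis unfolding Q2_def using nz_L[OF assms(2) h(1)] nz_L[OF assms(2) h(2)] h(3) rk1_t2[OF h(4)] rk1_t2[OF h(5)] by blast
qed
lemma Q2_t3: assumes "Q2 d1 d2 d3 \<phi>" "invm d3 L M" shows "Q2 d1 d2 d3 (ap3 d3 L \<phi>)"
proof -
  obtain v a b v' a' b' where h: "nz d2 b" "nz d2 b'" "indep d1 a a'" "rk1 d1 d2 d3 \<phi> v a b" "rk1 d1 d2 d3 \<phi> v' a' b'"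
    using assms(1) unfolding Q2_def by blast
  show ?thesis unfolding Q2_def using h(1,2,3) rk1_t3[OF h(4) assms(2)] rk1_t3[OF h(5) assms(2)] by blast
qed



lemma addmod_cancel:
  fixes r q q' d :: nat
  assumes "(r + q) mod d = (r + q') mod d" "q < d" "q' < d"
  shows "q = q'"
proof -
  have key: "a = b" if "(r + a) mod d = (r + b) mod d" "a \<le> b" "b < d" for a b :: nat
  proof -
    have "d dvd (r + b) - (r + a)" using mod_eq_dvd_iff_nat[of "r+a" "r+b" d] that by simp
    hence "d dvd b - a" by simp
    moreover have "b - a < d" using that by simp
    ultimately have "b - a = 0" using nat_dvd_not_less by blast
    thus "a = b" using that by simp
  qed
  show ?thesis
  proof (cases "q \<le> q'")
    case True thus ?thesis using key assms by blast
  next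
    case False thus ?thesis using key[of q' q] assms by simp
  qed
qed


lemma sum_single:
  assumes "finite A" "i0 \<in> A" "\<And>i. i \<in> A \<Longrightarrow> i \<noteq> i0 \<Longrightarrow> f i = 0"
  shows "sum f A = f i0"
proof -
  have "sum f A = sum (\<lambda>i. if i = i0 then f i0 else 0) A" using assms(3) by (intro sum.cong) auto
  also have "\<dots> = f i0" using assms(1,2) by (simp add: sum.delta)
  finally show ?thesis .
qed

lemma conv_nonzero:
  fixes u v :: "nat \<Rightarrow> complex"
  assumes "nz m u" "nz n v"
  shows "\<exists>s. (\<Sum>j<m. \<Sum>k<n. if j + k = s then u j * v k else 0) \<noteq> 0"
proof -
  define SJ where "SJ = {j. j < m \<and> u j \<noteq> 0}"
  define SK where "SK = {k. k < n \<and> v k \<noteq> 0}"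
  have fJ: "finite SJ" "SJ \<noteq> {}" using assms(1) unfolding SJ_def nz_def by auto
  have fK: "finite SK" "SK \<noteq> {}" using assms(2) unfolding SK_def nz_def by auto
  define J where "J = Max SJ"
  define K where "K = Max SK"
  have J: "J < m" "u J \<noteq> 0" using Max_in[OF fJ] unfolding J_def SJ_def by auto
  have K: "K < n" "v K \<noteq> 0" using Max_in[OF fK] unfolding K_def SK_def by auto
  have Jm: "u j = 0" if "j < m" "J < j" for j
  proof (rule ccontr)
    assume "u j \<noteq> 0" hence "j \<in> SJ" using that unfolding SJ_def by auto
    hence "j \<le> J" unfolding J_def using Max_ge[OF fJ(1)] by auto
    thus False using that by simp
  qed
  have Km: "v k = 0" if "k < n" "K < k" for k
  proof (rule ccontr)
    assume "v k \<noteq> 0" hence "k \<in> SK" using that unfolding SK_def by auto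
    hence "k \<le> K" unfolding K_def using Max_ge[OF fK(1)] by auto
    thus False using that by simp
  qed
  have inner: "(\<Sum>k<n. if j + k = J + K then u j * v k else 0) = (if j = J then u J * v K else 0)"
    if j: "j < m" for j
  proof (cases "j = J")
    case True
    have "(\<Sum>k<n. if j + k = J + K then u j * v k else 0) = (if j + K = J + K then u j * v K else 0)"
      by (rule sum_single) (use K True in auto)
    thus ?thesis using True by simp
  next
    case False
    have "(\<Sum>k<n. if j + k = J + K then u j * v k else 0) = 0"
    proof (intro sum.neutral ballI)
      fix k assume k: "k \<in> {..<n}"
      show "(if j + k = J + K then u j * v k else 0) = 0"
      proof (cases "j + k = J + K")
        case True
        show ?thesis
        proof (cases "J < j")
          case True thus ?thesis using Jm j by simp
        next
          case False
          hence "K < k" using \<open>j + k = J + K\<close> \<open>j \<noteq> J\<close> by simp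
          thus ?thesis using Km k by simp
        qed
      qed simp
    qed
    thus ?thesis using False by simp
  qed
  have "(\<Sum>j<m. \<Sum>k<n. if j + k = J + K then u j * v k else 0) = (\<Sum>j<m. if j = J then u J * v K else 0)"
    using inner by (intro sum.cong) auto
  also have "\<dots> = u J * v K" using J(1) by (simp add: sum.delta)
  finally show ?thesis using J K by (intro exI[of _ "J + K"]) simp
qed

lemma sum_ind_r: "k0 < (n::nat) \<Longrightarrow> (\<Sum>k<n. f k * (if k = k0 then 1 else 0)) = (f k0 :: complex)"
  by (subst sum_single[of _ k0]) auto
lemma sum_ind_l: "k0 < (n::nat) \<Longrightarrow> (\<Sum>k<n. (if k = k0 then 1 else 0) * f k) = (f k0 :: complex)"
  by (subst sum_single[of _ k0]) auto

definition pos1 :: "nat \<Rightarrow> nat \<Rightarrow> nat \<Rightarrow> nat \<times> nat" where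
  "pos1 d2 d3 i = (i mod d2, (i mod d2 + i div d2) mod d3)"

lemma pos1_inj:
  assumes "0 < d2" "i < d2 * d3" "i' < d2 * d3" "pos1 d2 d3 i = pos1 d2 d3 i'"
  shows "i = i'"
proof -
  have r: "i mod d2 = i' mod d2" using assms(4) unfolding pos1_def by simp
  have q: "i div d2 < d3" "i' div d2 < d3" using assms(1-3)
    by (simp_all add: div_less_iff_less_mult mult.commute)
  have "(i mod d2 + i div d2) mod d3 = (i mod d2 + i' div d2) mod d3"
    using assms(4) r unfolding pos1_def by simp
  hence "i div d2 = i' div d2" using addmod_cancel q by blast
  thus ?thesis using r by (metis div_mult_mod_eq)
qed

lemma pos1_bound: "0 < d2 \<Longrightarrow> 0 < d3 \<Longrightarrow> fst (pos1 d2 d3 i) < d2 \<and> snd (pos1 d2 d3 i) < d3"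
  unfolding pos1_def by simp

definition Psi1 :: "nat \<Rightarrow> nat \<Rightarrow> nat \<Rightarrow> tensor3" where
  "Psi1 d1 d2 d3 = (\<lambda>i j k. if i < d1 \<and> (j, k) = pos1 d2 d3 i then 1 else 0)"

lemma Psi1_space: "0 < d2 \<Longrightarrow> 0 < d3 \<Longrightarrow> Psi1 d1 d2 d3 \<in> tensor_space d1 d2 d3"
  unfolding tensor_space_def Psi1_def
  by (auto simp: pos1_def) (metis mod_less_divisor not_le)+

lemma Psi1_concise:
  assumes "0 < d3" "d3 \<le> d2" "d2 \<le> d1" "d1 \<le> d2 * d3"
  shows "concise d1 d2 d3 (Psi1 d1 d2 d3)"
proof -
  have d2: "0 < d2" using assms by simp
  have c1: "conc1 d1 d2 d3 (Psi1 d1 d2 d3)" unfolding conc1_def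
  proof (intro allI impI)
    fix c i0 assume H: "\<forall>j<d2. \<forall>k<d3. (\<Sum>i<d1. c i * Psi1 d1 d2 d3 i j k) = 0" and i0: "i0 < d1"
    obtain j k where jk: "pos1 d2 d3 i0 = (j, k)" by (cases "pos1 d2 d3 i0")
    have b: "j < d2" "k < d3" using pos1_bound[OF d2 assms(1), of i0] jk by auto
    have "(\<Sum>i<d1. c i * Psi1 d1 d2 d3 i j k) = c i0 * Psi1 d1 d2 d3 i0 j k"
    proof (rule sum_single)
      fix i assume i: "i \<in> {..<d1}" "i \<noteq> i0"
      have "pos1 d2 d3 i \<noteq> pos1 d2 d3 i0"
        using pos1_inj[of d2 i d3 i0] d2 i i0 assms(4) by auto
      thus "c i * Psi1 d1 d2 d3 i j k = 0" unfolding Psi1_def using jk by auto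
    qed (use i0 in auto)
    also have "\<dots> = c i0" unfolding Psi1_def using jk i0 by simp
    finally show "c i0 = 0" using H b by simp
  qed
  have c2: "conc2 d1 d2 d3 (Psi1 d1 d2 d3)" unfolding conc2_def
  proof (intro allI impI)
    fix c j0 assume H: "\<forall>i<d1. \<forall>k<d3. (\<Sum>j<d2. c j * Psi1 d1 d2 d3 i j k) = 0" and j0: "j0 < d2"
    have p: "pos1 d2 d3 j0 = (j0, j0 mod d3)" unfolding pos1_def using j0 by simp
    have "(\<Sum>j<d2. c j * Psi1 d1 d2 d3 j0 j (j0 mod d3)) = c j0 * Psi1 d1 d2 d3 j0 j0 (j0 mod d3)"
      by (rule sum_single) (use j0 p in \<open>auto simp: Psi1_def\<close>)
    also have "\<dots> = c j0" unfolding Psi1_def using p j0 assms by simp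
    finally show "c j0 = 0" using H j0 assms by simp
  qed
  have c3: "conc3 d1 d2 d3 (Psi1 d1 d2 d3)" unfolding conc3_def
  proof (intro allI impI)
    fix c k0 assume H: "\<forall>i<d1. \<forall>j<d2. (\<Sum>k<d3. c k * Psi1 d1 d2 d3 i j k) = 0" and k0: "k0 < d3"
    have p: "pos1 d2 d3 k0 = (k0, k0)" unfolding pos1_def using k0 assms by simp
    have "(\<Sum>k<d3. c k * Psi1 d1 d2 d3 k0 k0 k) = c k0 * Psi1 d1 d2 d3 k0 k0 k0"
      by (rule sum_single) (use k0 p in \<open>auto simp: Psi1_def\<close>)
    also have "\<dots> = c k0" unfolding Psi1_def using p k0 assms by simp
    finally show "c k0 = 0" using H k0 assms by simp
  qed
  show ?thesis unfolding concise_def using c1 c2 c3 by simp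
qed

lemma con23_ind:
  assumes "j0 < d2" "k0 < d3"
  shows "con23 d2 d3 \<phi> (\<lambda>j. if j = j0 then 1 else 0) (\<lambda>k. if k = k0 then 1 else 0) i = \<phi> i j0 k0"
proof -
  have "con23 d2 d3 \<phi> (\<lambda>j. if j = j0 then 1 else 0) (\<lambda>k. if k = k0 then 1 else 0) i
      = (\<Sum>j<d2. \<Sum>k<d3. \<phi> i j k * (if j = j0 then 1 else 0) * (if k = k0 then 1 else 0))"
    unfolding con23_def ..
  also have "\<dots> = (\<Sum>k<d3. \<phi> i j0 k * (if j0 = j0 then 1 else 0) * (if k = k0 then 1 else 0))"
    by (rule sum_single) (use assms in auto)
  also have "\<dots> = \<phi> i j0 k0" using sum_ind_r[OF assms(2), of "\<lambda>k. \<phi> i j0 k * 1"] by simp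
  finally show ?thesis .
qed

lemma Psi1_PU:
  assumes "0 < d2" "0 < d3" "d1 < d2 * d3"
  shows "PU d1 d2 d3 (Psi1 d1 d2 d3)"
proof -
  define i1 where "i1 = d2 * d3 - 1"
  obtain j0 k0 where p: "pos1 d2 d3 i1 = (j0, k0)" by (cases "pos1 d2 d3 i1")
  have b: "j0 < d2" "k0 < d3" using pos1_bound[OF assms(1,2), of i1] p by auto
  have "\<forall>i<d1. con23 d2 d3 (Psi1 d1 d2 d3) (\<lambda>j. if j = j0 then 1 else 0) (\<lambda>k. if k = k0 then 1 else 0) i = 0"
  proof (intro allI impI)
    fix i assume i: "i < d1"
    have "pos1 d2 d3 i \<noteq> pos1 d2 d3 i1"
      using pos1_inj[of d2 i d3 i1] i assms unfolding i1_def by auto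
    thus "con23 d2 d3 (Psi1 d1 d2 d3) (\<lambda>j. if j = j0 then 1 else 0) (\<lambda>k. if k = k0 then 1 else 0) i = 0"
      unfolding con23_ind[OF b] Psi1_def using p by auto
  qed
  moreover have "nz d2 (\<lambda>j. if j = j0 then 1 else 0)" "nz d3 (\<lambda>k. if k = k0 then 1 else 0)"
    unfolding nz_def using b by auto
  ultimately show ?thesis unfolding PU_def by blast
qed

lemma Psi1_PW:
  assumes "0 < d1" "0 < d2" "0 < d3"
  shows "PW d1 d2 d3 (Psi1 d1 d2 d3)"
proof -
  have "\<forall>j<d2. \<forall>k<d3. con1 d1 (Psi1 d1 d2 d3) (\<lambda>i. if i = 0 then 1 else 0) j k
        = (\<lambda>j. if j = 0 then 1 else 0) j * (\<lambda>k. if k = 0 then 1 else 0) k"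
  proof (intro allI impI)
    fix j k assume "j < d2" "k < d3"
    have "con1 d1 (Psi1 d1 d2 d3) (\<lambda>i. if i = 0 then 1 else 0) j k = Psi1 d1 d2 d3 0 j k"
      unfolding con1_def using sum_ind_l[OF assms(1)] by simp
    also have "\<dots> = (if j = 0 then 1 else 0) * (if k = 0 then 1 else 0)"
      unfolding Psi1_def pos1_def using assms by auto
    finally show "con1 d1 (Psi1 d1 d2 d3) (\<lambda>i. if i = 0 then 1 else 0) j k
        = (\<lambda>j. if j = 0 then 1 else 0) j * (\<lambda>k. if k = 0 then 1 else 0) k" by simp
  qed
  moreover have "nz d2 (\<lambda>j. if j = 0 then 1 else 0)" "nz d3 (\<lambda>k. if k = 0 then 1 else 0)"
    unfolding nz_def using assms by auto
  ultimately show ?thesis unfolding PW_def by blast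
qed



definition cpos :: "nat \<Rightarrow> nat \<Rightarrow> nat \<times> nat" where
  "cpos d2 n = (if n < d2 then (n, 0) else (d2 - 1, n - (d2 - 1)))"

definition qA :: "nat \<Rightarrow> nat \<Rightarrow> nat \<times> nat" where
  "qA d2 t = (t mod (d2 - 1), 1 + t div (d2 - 1))"

definition PhiA :: "nat \<Rightarrow> nat \<Rightarrow> nat \<Rightarrow> tensor3" where
  "PhiA d1 d2 d3 = (\<lambda>i j k. if i < d1 \<and> j < d2 \<and> k < d3 then
      (if i < d2 + d3 - 1 then (if j + k = i then 1 else 0)
       else (if (j, k) = qA d2 (i - (d2 + d3 - 1)) then 1 else 0)) else 0)"

lemma PhiA_space: "PhiA d1 d2 d3 \<in> tensor_space d1 d2 d3"
  unfolding tensor_space_def PhiA_def by auto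

lemma qA_inj: assumes "qA d2 t = qA d2 t'" shows "t = t'"
proof -
  have "t mod (d2-1) = t' mod (d2-1)" "t div (d2-1) = t' div (d2-1)" using assms by (auto simp: qA_def)
  thus ?thesis by (metis div_mult_mod_eq)
qed

lemma qA_cpos: assumes "2 \<le> d2" shows "qA d2 t \<noteq> cpos d2 n"
proof -
  have "t mod (d2-1) < d2-1" using assms by simp
  thus ?thesis by (auto simp: qA_def cpos_def)
qed

lemma arith_A: "2 \<le> (d2::nat) \<Longrightarrow> 2 \<le> d3 \<Longrightarrow> (d2 - 1) * (d3 - 1) + (d2 + d3 - 1) = d2 * d3"
  by (cases d2; cases d3) (auto simp: algebra_simps)

lemma PhiA_concise:
  assumes "2 \<le> d3" "d3 \<le> d2" "d2 + d3 - 1 \<le> d1" "d1 < d2 * d3"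
  shows "concise d1 d2 d3 (PhiA d1 d2 d3)"
proof -
  define n0 where "n0 = d2 + d3 - 1"
  have d2: "2 \<le> d2" using assms by simp
  have c1: "conc1 d1 d2 d3 (PhiA d1 d2 d3)" unfolding conc1_def
  proof (intro allI impI)
    fix c i0 assume H: "\<forall>j<d2. \<forall>k<d3. (\<Sum>i<d1. c i * PhiA d1 d2 d3 i j k) = 0" and i0: "i0 < d1"
    have low: "c n = 0" if n: "n < n0" for n
    proof -
      obtain j k where jk: "cpos d2 n = (j, k)" by (cases "cpos d2 n")
      have b: "j < d2" "k < d3" "j + k = n" using jk n d2 assms unfolding cpos_def n0_def
        by (auto split: if_splits)
      have "(\<Sum>i<d1. c i * PhiA d1 d2 d3 i j k) = c n * PhiA d1 d2 d3 n j k"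
      proof (rule sum_single)
        fix i assume i: "i \<in> {..<d1}" "i \<noteq> n"
        show "c i * PhiA d1 d2 d3 i j k = 0"
        proof (cases "i < n0")
          case True thus ?thesis using i b unfolding PhiA_def n0_def by auto
        next
          case False
          have "(j, k) \<noteq> qA d2 (i - n0)" using qA_cpos[OF d2, of "i - n0" n] jk by auto
          thus ?thesis using False unfolding PhiA_def n0_def by auto
        qed
      qed (use n assms in \<open>auto simp: n0_def\<close>)
      also have "\<dots> = c n" using b n assms unfolding PhiA_def n0_def by auto
      finally show "c n = 0" using H b by simp
    qed
    show "c i0 = 0"
    proof (cases "i0 < n0")
      case True thus ?thesis using low by simp
    next
      case False
      define t where "t = i0 - n0"
      obtain j k where jk: "qA d2 t = (j, k)" by (cases "qA d2 t")
      have "t < (d2 - 1) * (d3 - 1)" using arith_A[OF d2 assms(1)] i0 False assms(4)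
        unfolding t_def n0_def by linarith
      hence dv: "t div (d2 - 1) < d3 - 1" using d2 by (simp add: div_less_iff_less_mult mult.commute)
      have m: "t mod (d2-1) < d2-1" using d2 by simp
      have jj: "j = t mod (d2-1)" "k = 1 + t div (d2 - 1)" using jk unfolding qA_def by auto
      have b: "j < d2" "k < d3" using jj m dv by linarith+
      have "(\<Sum>i<d1. c i * PhiA d1 d2 d3 i j k) = c i0 * PhiA d1 d2 d3 i0 j k"
      proof (rule sum_single)
        fix i assume i: "i \<in> {..<d1}" "i \<noteq> i0"
        show "c i * PhiA d1 d2 d3 i j k = 0"
        proof (cases "i < n0")
          case True thus ?thesis using low by simp
        next
          case F2: False
          have "i - n0 \<noteq> t" using F2 False i unfolding t_def by auto
          hence "(j, k) \<noteq> qA d2 (i - n0)" using qA_inj[of d2 "i - n0" t] jk by auto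
          thus ?thesis using F2 unfolding PhiA_def n0_def by auto
        qed
      qed (use i0 in auto)
      also have "\<dots> = c i0" using b i0 False jk unfolding PhiA_def n0_def t_def by auto
      finally show "c i0 = 0" using H b by simp
    qed
  qed
  have c2: "conc2 d1 d2 d3 (PhiA d1 d2 d3)" unfolding conc2_def
  proof (intro allI impI)
    fix c j0 assume H: "\<forall>i<d1. \<forall>k<d3. (\<Sum>j<d2. c j * PhiA d1 d2 d3 i j k) = 0" and j0: "j0 < d2"
    have "(\<Sum>j<d2. c j * PhiA d1 d2 d3 j0 j 0) = c j0 * PhiA d1 d2 d3 j0 j0 0"
      by (rule sum_single) (use j0 in \<open>auto simp: PhiA_def\<close>)
    also have "\<dots> = c j0" using j0 assms unfolding PhiA_def by auto
    finally show "c j0 = 0" using H j0 assms by simp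
  qed
  have c3: "conc3 d1 d2 d3 (PhiA d1 d2 d3)" unfolding conc3_def
  proof (intro allI impI)
    fix c k0 assume H: "\<forall>i<d1. \<forall>j<d2. (\<Sum>k<d3. c k * PhiA d1 d2 d3 i j k) = 0" and k0: "k0 < d3"
    have "(\<Sum>k<d3. c k * PhiA d1 d2 d3 k0 0 k) = c k0 * PhiA d1 d2 d3 k0 0 k0"
      by (rule sum_single) (use k0 in \<open>auto simp: PhiA_def\<close>)
    also have "\<dots> = c k0" using k0 assms unfolding PhiA_def by auto
    finally show "c k0 = 0" using H k0 assms by simp
  qed
  show ?thesis unfolding concise_def using c1 c2 c3 by simp
qed

lemma PhiA_not_PU:
  assumes "d2 + d3 - 1 \<le> d1"
  shows "\<not> PU d1 d2 d3 (PhiA d1 d2 d3)"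
proof
  assume "PU d1 d2 d3 (PhiA d1 d2 d3)"
  then obtain u v where uv: "nz d2 u" "nz d3 v" "\<forall>i<d1. con23 d2 d3 (PhiA d1 d2 d3) u v i = 0"
    unfolding PU_def by blast
  obtain s where s: "(\<Sum>j<d2. \<Sum>k<d3. if j + k = s then u j * v k else 0) \<noteq> 0"
    using conv_nonzero[OF uv(1,2)] by blast
  show False
  proof (cases "s < d2 + d3 - 1")
    case True
    have "con23 d2 d3 (PhiA d1 d2 d3) u v s = (\<Sum>j<d2. \<Sum>k<d3. if j + k = s then u j * v k else 0)"
      unfolding con23_def PhiA_def using True assms by (intro sum.cong) auto
    thus False using s uv(3) True assms by simp
  next
    case False
    have "(\<Sum>j<d2. \<Sum>k<d3. if j + k = s then u j * v k else 0) = 0"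
      using False by (intro sum.neutral ballI) auto
    thus False using s by simp
  qed
qed



lemma ind2:
  "(\<Sum>j<(a::nat). \<Sum>k<(b::nat). (if j + k = s then 1 else 0) * (if (j, k) = P then 1 else 0))
     = (if fst P < a \<and> snd P < b \<and> fst P + snd P = s then (1::complex) else 0)"
proof -
  obtain p1 p2 where P: "P = (p1, p2)" by (cases P)
  have pw: "\<And>j k. (if j + k = s then 1 else 0) * (if (j, k) = P then 1 else 0)
      = (if j = p1 \<and> k = p2 \<and> p1 + p2 = s then 1 else (0::complex))" using P by auto
  have e: "(\<Sum>j<a. \<Sum>k<b. (if j + k = s then 1 else 0) * (if (j, k) = P then 1 else 0))
     = (\<Sum>j<a. \<Sum>k<b. if j = p1 \<and> k = p2 \<and> p1 + p2 = s then 1 else (0::complex))"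
    by (simp only: pw)
  show ?thesis
  proof (cases "p1 < a \<and> p2 < b")
    case True
    have "(\<Sum>j<a. \<Sum>k<b. if j = p1 \<and> k = p2 \<and> p1 + p2 = s then 1 else (0::complex))
        = (\<Sum>k<b. if p1 = p1 \<and> k = p2 \<and> p1 + p2 = s then 1 else (0::complex))"
      by (rule sum_single) (use True in auto)
    also have "\<dots> = (if p1 = p1 \<and> p2 = p2 \<and> p1 + p2 = s then 1 else (0::complex))"
      by (rule sum_single) (use True in auto)
    finally show ?thesis using P True e by simp
  next
    case False
    have "(\<Sum>j<a. \<Sum>k<b. if j = p1 \<and> k = p2 \<and> p1 + p2 = s then 1 else (0::complex)) = 0"
      by (intro sum.neutral ballI) (use False in auto)
    thus ?thesis using P False e by auto
  qed
qed


lemma arith_B: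
  assumes "3 \<le> (d3::nat)" "d3 \<le> d2"
  shows "d2 + d3 - 2 \<le> (d2 - 1) * (d3 - 1)"
proof -
  obtain a b where ab: "d2 = a + 3" "d3 = b + 3" using assms
    by (metis add.commute le_Suc_ex le_trans)
  show ?thesis unfolding ab by (simp add: algebra_simps)
qed

definition pB :: "nat \<Rightarrow> nat \<Rightarrow> nat \<Rightarrow> nat \<times> nat" where
  "pB d2 d3 i = (i mod (d2 - 1), 1 + (i mod (d2 - 1) + i div (d2 - 1)) mod (d3 - 1))"

definition cpB :: "nat \<Rightarrow> nat \<Rightarrow> nat \<Rightarrow> nat \<times> nat" where
  "cpB d2 d3 i = cpos d2 (fst (pB d2 d3 i) + snd (pB d2 d3 i))"

lemma pB_inj:
  assumes "2 \<le> d2" "i < (d2-1)*(d3-1)" "i' < (d2-1)*(d3-1)" "pB d2 d3 i = pB d2 d3 i'"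
  shows "i = i'"
proof -
  have "fst (pB d2 d3 i) = fst (pB d2 d3 i')" using assms(4) by simp
  hence h1: "i mod (d2-1) = i' mod (d2-1)" unfolding pB_def by simp
  have "snd (pB d2 d3 i) = snd (pB d2 d3 i')" using assms(4) by simp
  hence h2: "(i mod (d2-1) + i div (d2-1)) mod (d3-1) = (i' mod (d2-1) + i' div (d2-1)) mod (d3-1)"
    unfolding pB_def by simp
  have "pos1 (d2-1) (d3-1) i = pos1 (d2-1) (d3-1) i'"
    unfolding pos1_def by (rule arg_cong2[where f=Pair, OF h1 h2])
  thus ?thesis using pos1_inj[of "d2-1" i "d3-1" i'] assms by simp
qed

lemma pB_b:
  assumes "2 \<le> d2" "2 \<le> d3"
  shows "fst (pB d2 d3 i) < d2 - 1" "1 \<le> snd (pB d2 d3 i)" "snd (pB d2 d3 i) < d3"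
proof -
  have x: "(i mod (d2 - 1) + i div (d2 - 1)) mod (d3 - 1) < d3 - 1" using assms by simp
  show "fst (pB d2 d3 i) < d2 - 1" using assms unfolding pB_def by simp
  show "1 \<le> snd (pB d2 d3 i)" unfolding pB_def by simp
  show "snd (pB d2 d3 i) < d3" using x unfolding pB_def by simp
qed

lemma cpos_prop:
  assumes "1 \<le> d2" "n \<le> d2 + d3 - 2" "1 \<le> d3"
  shows "fst (cpos d2 n) < d2" "snd (cpos d2 n) < d3" "fst (cpos d2 n) + snd (cpos d2 n) = n"
    "snd (cpos d2 n) = 0 \<or> fst (cpos d2 n) = d2 - 1"
  using assms unfolding cpos_def by auto

lemma cpB_facts:
  assumes "2 \<le> d2" "2 \<le> d3"
  shows "fst (cpB d2 d3 i) < d2" "snd (cpB d2 d3 i) < d3"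
    "fst (cpB d2 d3 i) + snd (cpB d2 d3 i) = fst (pB d2 d3 i) + snd (pB d2 d3 i)"
    "snd (cpB d2 d3 i) = 0 \<or> fst (cpB d2 d3 i) = d2 - 1"
proof -
  have n: "fst (pB d2 d3 i) + snd (pB d2 d3 i) \<le> d2 + d3 - 2" using pB_b[OF assms, of i] by linarith
  note c = cpos_prop[of d2 _ d3, OF _ n]
  show "fst (cpB d2 d3 i) < d2" "snd (cpB d2 d3 i) < d3"
    "fst (cpB d2 d3 i) + snd (cpB d2 d3 i) = fst (pB d2 d3 i) + snd (pB d2 d3 i)"
    "snd (cpB d2 d3 i) = 0 \<or> fst (cpB d2 d3 i) = d2 - 1"
    unfolding cpB_def using c assms by auto
qed

lemma pB_cpB_distinct:
  assumes "2 \<le> d2" "2 \<le> d3"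
  shows "fst (pB d2 d3 i) \<noteq> fst (cpB d2 d3 i)" "snd (pB d2 d3 i) \<noteq> snd (cpB d2 d3 i)"
    "pB d2 d3 i \<noteq> cpB d2 d3 i"
proof -
  note p = pB_b[OF assms, of i] and c = cpB_facts[OF assms, of i]
  have ne: "pB d2 d3 i \<noteq> cpB d2 d3 i"
  proof
    assume "pB d2 d3 i = cpB d2 d3 i"
    hence "fst (pB d2 d3 i) = fst (cpB d2 d3 i)" "snd (pB d2 d3 i) = snd (cpB d2 d3 i)" by auto
    thus False using p c(4) by auto
  qed
  show "pB d2 d3 i \<noteq> cpB d2 d3 i" by (rule ne)
  show "fst (pB d2 d3 i) \<noteq> fst (cpB d2 d3 i)"
  proof
    assume a: "fst (pB d2 d3 i) = fst (cpB d2 d3 i)"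
    hence "snd (pB d2 d3 i) = snd (cpB d2 d3 i)" using c(3) by simp
    with a ne show False by (simp add: prod_eq_iff)
  qed
  show "snd (pB d2 d3 i) \<noteq> snd (cpB d2 d3 i)"
  proof
    assume a: "snd (pB d2 d3 i) = snd (cpB d2 d3 i)"
    hence "fst (pB d2 d3 i) = fst (cpB d2 d3 i)" using c(3) by simp
    with a ne show False by (simp add: prod_eq_iff)
  qed
qed

definition PhiB :: "nat \<Rightarrow> nat \<Rightarrow> nat \<Rightarrow> tensor3" where
  "PhiB d1 d2 d3 = (\<lambda>i j k. if i < d1 then (if (j, k) = pB d2 d3 i then 1
       else if (j, k) = cpB d2 d3 i then -1 else 0) else 0)"

lemma PhiB_space:
  assumes "2 \<le> d2" "2 \<le> d3"
  shows "PhiB d1 d2 d3 \<in> tensor_space d1 d2 d3"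
  unfolding tensor_space_def
proof (intro CollectI allI impI)
  fix i j k assume o: "d1 \<le> i \<or> d2 \<le> j \<or> d3 \<le> k"
  have b1: "fst (pB d2 d3 i) < d2" "snd (pB d2 d3 i) < d3" using pB_b[OF assms, of i] by linarith+
  have b2: "fst (cpB d2 d3 i) < d2" "snd (cpB d2 d3 i) < d3" using cpB_facts[OF assms, of i] by linarith+
  show "PhiB d1 d2 d3 i j k = 0"
  proof (cases "d1 \<le> i")
    case True thus ?thesis unfolding PhiB_def by auto
  next
    case False
    hence o2: "d2 \<le> j \<or> d3 \<le> k" using o by auto
    have "(j, k) \<noteq> pB d2 d3 i" using b1 o2 by (auto simp: prod_eq_iff)
    moreover have "(j, k) \<noteq> cpB d2 d3 i" using b2 o2 by (auto simp: prod_eq_iff)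
    ultimately show ?thesis unfolding PhiB_def by auto
  qed
qed


lemma PhiB_at_pB: "i < d1 \<Longrightarrow> PhiB d1 d2 d3 i (fst (pB d2 d3 i)) (snd (pB d2 d3 i)) = 1"
  unfolding PhiB_def by simp

lemma PhiB_at_cpB: "2 \<le> d2 \<Longrightarrow> 2 \<le> d3 \<Longrightarrow> i < d1 \<Longrightarrow> PhiB d1 d2 d3 i (fst (cpB d2 d3 i)) (snd (cpB d2 d3 i)) = -1"
proof -
  assume a: "2 \<le> d2" "2 \<le> d3" "i < d1"
  have "cpB d2 d3 i \<noteq> pB d2 d3 i" using pB_cpB_distinct(3)[OF a(1,2), of i] by metis
  thus ?thesis using a(3) by (auto simp: PhiB_def)
qed

lemma E2p:
  assumes "2 \<le> d2" "2 \<le> d3" "i < d1"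
  shows "(\<Sum>j<d2. c j * PhiB d1 d2 d3 i j (snd (pB d2 d3 i))) = c (fst (pB d2 d3 i))"
proof -
  note D = pB_cpB_distinct[OF assms(1,2), of i]
  have b: "fst (pB d2 d3 i) < d2" using pB_b(1)[OF assms(1,2), of i] by linarith
  have "(\<Sum>j<d2. c j * PhiB d1 d2 d3 i j (snd (pB d2 d3 i)))
      = c (fst (pB d2 d3 i)) * PhiB d1 d2 d3 i (fst (pB d2 d3 i)) (snd (pB d2 d3 i))"
    by (rule sum_single) (use b D in \<open>auto simp: PhiB_def prod_eq_iff\<close>)
  thus ?thesis using PhiB_at_pB[OF assms(3)] by simp
qed

lemma E2c:
  assumes "2 \<le> d2" "2 \<le> d3" "i < d1"
  shows "(\<Sum>j<d2. c j * PhiB d1 d2 d3 i j (snd (cpB d2 d3 i))) = - c (fst (cpB d2 d3 i))"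
proof -
  note D = pB_cpB_distinct[OF assms(1,2), of i]
  have b: "fst (cpB d2 d3 i) < d2" using cpB_facts(1)[OF assms(1,2), of i] .
  have "(\<Sum>j<d2. c j * PhiB d1 d2 d3 i j (snd (cpB d2 d3 i)))
      = c (fst (cpB d2 d3 i)) * PhiB d1 d2 d3 i (fst (cpB d2 d3 i)) (snd (cpB d2 d3 i))"
    by (rule sum_single) (use b D in \<open>auto simp: PhiB_def prod_eq_iff\<close>)
  thus ?thesis using PhiB_at_cpB[OF assms] by simp
qed

lemma E3p:
  assumes "2 \<le> d2" "2 \<le> d3" "i < d1"
  shows "(\<Sum>k<d3. c k * PhiB d1 d2 d3 i (fst (pB d2 d3 i)) k) = c (snd (pB d2 d3 i))"
proof -
  note D = pB_cpB_distinct[OF assms(1,2), of i]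
  have b: "snd (pB d2 d3 i) < d3" using pB_b(3)[OF assms(1,2), of i] .
  have "(\<Sum>k<d3. c k * PhiB d1 d2 d3 i (fst (pB d2 d3 i)) k)
      = c (snd (pB d2 d3 i)) * PhiB d1 d2 d3 i (fst (pB d2 d3 i)) (snd (pB d2 d3 i))"
    by (rule sum_single) (use b D in \<open>auto simp: PhiB_def prod_eq_iff\<close>)
  thus ?thesis using PhiB_at_pB[OF assms(3)] by simp
qed

lemma E3c:
  assumes "2 \<le> d2" "2 \<le> d3" "i < d1"
  shows "(\<Sum>k<d3. c k * PhiB d1 d2 d3 i (fst (cpB d2 d3 i)) k) = - c (snd (cpB d2 d3 i))"
proof -
  note D = pB_cpB_distinct[OF assms(1,2), of i]
  have b: "snd (cpB d2 d3 i) < d3" using cpB_facts(2)[OF assms(1,2), of i] .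
  have "(\<Sum>k<d3. c k * PhiB d1 d2 d3 i (fst (cpB d2 d3 i)) k)
      = c (snd (cpB d2 d3 i)) * PhiB d1 d2 d3 i (fst (cpB d2 d3 i)) (snd (cpB d2 d3 i))"
    by (rule sum_single) (use b D in \<open>auto simp: PhiB_def prod_eq_iff\<close>)
  thus ?thesis using PhiB_at_cpB[OF assms] by simp
qed

lemma PhiB_concise:
  assumes "3 \<le> d3" "d3 \<le> d2" "d2 \<le> d1" "d1 \<le> d2 + d3 - 2"
  shows "concise d1 d2 d3 (PhiB d1 d2 d3)"
proof -
  have d2: "2 \<le> d2" and d3: "2 \<le> d3" using assms by auto
  have d1b: "d1 \<le> (d2 - 1) * (d3 - 1)" using arith_B[OF assms(1,2)] assms(4) by linarith
  have c1: "conc1 d1 d2 d3 (PhiB d1 d2 d3)" unfolding conc1_def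
  proof (intro allI impI)
    fix c i0 assume H: "\<forall>j<d2. \<forall>k<d3. (\<Sum>i<d1. c i * PhiB d1 d2 d3 i j k) = 0" and i0: "i0 < d1"
    define P where "P = pB d2 d3 i0"
    have b: "fst P < d2" "snd P < d3" using pB_b[OF d2 d3, of i0] unfolding P_def by linarith+
    have "(\<Sum>i<d1. c i * PhiB d1 d2 d3 i (fst P) (snd P)) = c i0 * PhiB d1 d2 d3 i0 (fst P) (snd P)"
    proof (rule sum_single)
      fix i assume i: "i \<in> {..<d1}" "i \<noteq> i0"
      have "pB d2 d3 i \<noteq> P" using pB_inj[OF d2, of i d3 i0] i i0 d1b unfolding P_def by auto
      moreover have "cpB d2 d3 i \<noteq> P"
        using cpB_facts(4)[OF d2 d3, of i] pB_b[OF d2 d3, of i0] unfolding P_def by auto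
      ultimately show "c i * PhiB d1 d2 d3 i (fst P) (snd P) = 0" unfolding PhiB_def by auto
    qed (use i0 in auto)
    also have "\<dots> = c i0" using PhiB_at_pB[OF i0] unfolding P_def by simp
    finally show "c i0 = 0" using H b by simp
  qed
  have c2: "conc2 d1 d2 d3 (PhiB d1 d2 d3)" unfolding conc2_def
  proof (intro allI impI)
    fix c j0 assume H: "\<forall>i<d1. \<forall>k<d3. (\<Sum>j<d2. c j * PhiB d1 d2 d3 i j k) = 0" and j0: "j0 < d2"
    show "c j0 = 0"
    proof (cases "j0 < d2 - 1")
      case True
      have f: "fst (pB d2 d3 j0) = j0" unfolding pB_def using True by simp
      have i: "j0 < d1" using j0 assms by simp
      have "snd (pB d2 d3 j0) < d3" using pB_b[OF d2 d3] by simp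
      thus ?thesis using E2p[OF d2 d3 i, of c] H i f by simp
    next
      case False
      hence j0e: "j0 = d2 - 1" using j0 by simp
      define i where "i = d2 - 2"
      have i: "i < d1" using assms unfolding i_def by simp
      have fp: "fst (pB d2 d3 i) = d2 - 2" unfolding pB_def i_def using d2 by simp
      have sp: "1 \<le> snd (pB d2 d3 i)" using pB_b[OF d2 d3] by simp
      have "fst (cpB d2 d3 i) = d2 - 1"
        unfolding cpB_def cpos_def using fp sp d2 by auto
      moreover have "snd (cpB d2 d3 i) < d3" using cpB_facts[OF d2 d3] by simp
      ultimately show ?thesis using E2c[OF d2 d3 i, of c] H i j0e by simp
    qed
  qed
  have c3: "conc3 d1 d2 d3 (PhiB d1 d2 d3)" unfolding conc3_def
  proof (intro allI impI)
    fix c k0 assume H: "\<forall>i<d1. \<forall>j<d2. (\<Sum>k<d3. c k * PhiB d1 d2 d3 i j k) = 0" and k0: "k0 < d3"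
    show "c k0 = 0"
    proof (cases "k0 = 0")
      case False
      define i where "i = k0 - 1"
      have i: "i < d1" "i < d2 - 1" "i < d3 - 1" using assms k0 False unfolding i_def by auto
      have s: "snd (pB d2 d3 i) = k0" unfolding pB_def using i False unfolding i_def by simp
      have "fst (pB d2 d3 i) < d2" using pB_b[OF d2 d3, of i] by linarith
      thus ?thesis using E3p[OF d2 d3 i(1), of c] H i(1) s by simp
    next
      case True
      have i: "(0::nat) < d1" using assms by simp
      have p: "pB d2 d3 0 = (0, 1)" unfolding pB_def using d3 by simp
      have s: "snd (cpB d2 d3 0) = 0" "fst (cpB d2 d3 0) < d2"
        unfolding cpB_def cpos_def p using d2 by auto
      thus ?thesis using E3c[OF d2 d3 i, of c] H i True by simp
    qed
  qed
  show ?thesis unfolding concise_def using c1 c2 c3 by simp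
qed


lemma PhiB_not_PW:
  assumes d2: "2 \<le> d2" and d3: "2 \<le> d3"
  shows "\<not> PW d1 d2 d3 (PhiB d1 d2 d3)"
proof
  assume "PW d1 d2 d3 (PhiB d1 d2 d3)"
  then obtain c u v where uv: "nz d2 u" "nz d3 v"
    and H: "\<forall>j<d2. \<forall>k<d3. con1 d1 (PhiB d1 d2 d3) c j k = u j * v k"
    unfolding PW_def by blast
  obtain s where s: "(\<Sum>j<d2. \<Sum>k<d3. if j + k = s then u j * v k else 0) \<noteq> 0"
    using conv_nonzero[OF uv] by blast
  define X where "X = (\<lambda>j k. if j + k = s then 1 else (0::complex))"
  have "(\<Sum>j<d2. \<Sum>k<d3. if j + k = s then u j * v k else 0)
      = (\<Sum>j<d2. \<Sum>k<d3. X j k * (\<Sum>i<d1. c i * PhiB d1 d2 d3 i j k))"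
    using H unfolding con1_def X_def by (intro sum.cong refl) auto
  also have "\<dots> = (\<Sum>j<d2. \<Sum>k<d3. \<Sum>i<d1. c i * (X j k * PhiB d1 d2 d3 i j k))"
    by (simp add: sum_distrib_left ac_simps)
  also have "\<dots> = (\<Sum>j<d2. \<Sum>i<d1. \<Sum>k<d3. c i * (X j k * PhiB d1 d2 d3 i j k))" by (rule s_inner)
  also have "\<dots> = (\<Sum>i<d1. \<Sum>j<d2. \<Sum>k<d3. c i * (X j k * PhiB d1 d2 d3 i j k))" by (rule sum.swap)
  also have "\<dots> = (\<Sum>i<d1. c i * (\<Sum>j<d2. \<Sum>k<d3. X j k * PhiB d1 d2 d3 i j k))"
    by (simp add: sum_distrib_left)
  also have "\<dots> = 0"
  proof (intro sum.neutral ballI)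
    fix i assume i: "i \<in> {..<d1}"
    define P where "P = pB d2 d3 i"
    define C where "C = cpB d2 d3 i"
    have PC: "P \<noteq> C" using pB_cpB_distinct(3)[OF d2 d3, of i] unfolding P_def C_def .
    have pw: "\<And>j k. PhiB d1 d2 d3 i j k = (if (j, k) = P then 1 else 0) - (if (j, k) = C then 1 else 0)"
      using i PC unfolding PhiB_def P_def C_def by auto
    have "(\<Sum>j<d2. \<Sum>k<d3. X j k * PhiB d1 d2 d3 i j k)
        = (\<Sum>j<d2. \<Sum>k<d3. X j k * (if (j, k) = P then 1 else 0))
          - (\<Sum>j<d2. \<Sum>k<d3. X j k * (if (j, k) = C then 1 else 0))"
      by (simp add: pw right_diff_distrib sum_subtractf)
    also have "\<dots> = 0"
    proof -
      have bP: "fst P < d2" "snd P < d3" using pB_b[OF d2 d3, of i] unfolding P_def by linarith+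
      have bC: "fst C < d2" "snd C < d3" using cpB_facts[OF d2 d3, of i] unfolding C_def by linarith+
      have eq: "fst C + snd C = fst P + snd P" using cpB_facts(3)[OF d2 d3, of i] unfolding C_def P_def .
      show ?thesis unfolding X_def ind2 using bP bC eq by simp
    qed
    finally show "c i * (\<Sum>j<d2. \<Sum>k<d3. X j k * PhiB d1 d2 d3 i j k) = 0" by simp
  qed
  finally show False using s by simp
qed



lemma sum2: "(\<Sum>k<(2::nat). f k) = f 0 + (f 1 :: complex)"
  by (simp add: numeral_2_eq_2)

definition Psi2 :: "nat \<Rightarrow> nat \<Rightarrow> nat \<Rightarrow> tensor3" where
  "Psi2 d1 d2 d3 = (\<lambda>i j k. if i < d1 \<and> i < d2 \<and> j = i \<and> k = (if i = 0 then 0 else 1) then 1 else 0)"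

lemma Psi2_space: "2 \<le> d3 \<Longrightarrow> Psi2 d1 d2 d3 \<in> tensor_space d1 d2 d3"
  unfolding tensor_space_def Psi2_def by auto

lemma Psi2_concise:
  assumes "d1 = d2" "d3 = 2" "2 \<le> d2"
  shows "concise d1 d2 d3 (Psi2 d1 d2 d3)"
proof -
  have c1: "conc1 d1 d2 d3 (Psi2 d1 d2 d3)" unfolding conc1_def
  proof (intro allI impI)
    fix c i0 assume H: "\<forall>j<d2. \<forall>k<d3. (\<Sum>i<d1. c i * Psi2 d1 d2 d3 i j k) = 0" and i0: "i0 < d1"
    define k0 where "k0 = (if i0 = 0 then 0 else (1::nat))"
    have "(\<Sum>i<d1. c i * Psi2 d1 d2 d3 i i0 k0) = c i0 * Psi2 d1 d2 d3 i0 i0 k0"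
      by (rule sum_single) (use i0 in \<open>auto simp: Psi2_def\<close>)
    also have "\<dots> = c i0" using i0 assms unfolding Psi2_def k0_def by auto
    finally show "c i0 = 0" using H i0 assms unfolding k0_def by auto
  qed
  have c2: "conc2 d1 d2 d3 (Psi2 d1 d2 d3)" unfolding conc2_def
  proof (intro allI impI)
    fix c j0 assume H: "\<forall>i<d1. \<forall>k<d3. (\<Sum>j<d2. c j * Psi2 d1 d2 d3 i j k) = 0" and j0: "j0 < d2"
    define k0 where "k0 = (if j0 = 0 then 0 else (1::nat))"
    have "(\<Sum>j<d2. c j * Psi2 d1 d2 d3 j0 j k0) = c j0 * Psi2 d1 d2 d3 j0 j0 k0"
      by (rule sum_single) (use j0 in \<open>auto simp: Psi2_def\<close>)
    also have "\<dots> = c j0" using j0 assms unfolding Psi2_def k0_def by auto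
    finally show "c j0 = 0" using H j0 assms unfolding k0_def by auto
  qed
  have c3: "conc3 d1 d2 d3 (Psi2 d1 d2 d3)" unfolding conc3_def
  proof (intro allI impI)
    fix c k0 assume H: "\<forall>i<d1. \<forall>j<d2. (\<Sum>k<d3. c k * Psi2 d1 d2 d3 i j k) = 0" and k0: "k0 < d3"
    have kk: "(if k0 = 0 then 0 else 1) = k0" using k0 assms by auto
    have "(\<Sum>k<d3. c k * Psi2 d1 d2 d3 k0 k0 k) = c k0 * Psi2 d1 d2 d3 k0 k0 k0"
      by (rule sum_single) (use k0 kk in \<open>auto simp: Psi2_def\<close>)
    also have "\<dots> = c k0" using k0 assms kk unfolding Psi2_def by auto
    finally show "c k0 = 0" using H k0 assms by auto
  qed
  show ?thesis unfolding concise_def using c1 c2 c3 by simp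
qed

lemma Psi2_rk1_0:
  assumes "0 < d3"
  shows "rk1 d1 d2 d3 (Psi2 d1 d2 d3) (\<lambda>k. if k = 0 then 1 else 0) (\<lambda>i. if i = 0 then 1 else 0) (\<lambda>j. if j = 0 then 1 else 0)"
  unfolding rk1_def con3_def
proof (intro allI impI)
  fix i j assume ij: "i < d1" "j < d2"
  have "(\<Sum>k<d3. Psi2 d1 d2 d3 i j k * (if k = 0 then 1 else 0)) = Psi2 d1 d2 d3 i j 0"
    by (rule sum_ind_r[OF assms])
  thus "(\<Sum>k<d3. Psi2 d1 d2 d3 i j k * (if k = 0 then 1 else 0)) = (if i = 0 then 1 else 0) * (if j = 0 then 1 else 0)"
    using ij unfolding Psi2_def by auto
qed

lemma Psi2_P3:
  assumes "0 < d1" "0 < d2" "0 < d3"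
  shows "P3 d1 d2 d3 (Psi2 d1 d2 d3)"
proof -
  have "nz d1 (\<lambda>i. if i = 0 then 1 else 0)" "nz d2 (\<lambda>j. if j = 0 then 1 else 0)"
    using assms unfolding nz_def by auto
  thus ?thesis unfolding P3_def using Psi2_rk1_0[OF assms(3), of d1 d2] by blast
qed

lemma Psi2_Q2:
  shows "Q2 2 2 2 (Psi2 2 2 2)"
proof -
  have r1: "rk1 2 2 2 (Psi2 2 2 2) (\<lambda>k. if k = 1 then 1 else 0) (\<lambda>i. if i = 1 then 1 else 0) (\<lambda>j. if j = 1 then 1 else 0)"
    unfolding rk1_def con3_def Psi2_def by (simp add: sum2)
  have ind: "indep 2 (\<lambda>i. if i = 0 then 1 else 0) (\<lambda>i. if i = 1 then 1 else 0)"
    unfolding indep_def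
  proof (intro allI impI)
    fix \<alpha> \<beta> :: complex
    assume H: "\<forall>i<(2::nat). \<alpha> * (if i = 0 then 1 else 0) + \<beta> * (if i = 1 then 1 else 0) = 0"
    have "\<alpha> * (if (0::nat) = 0 then 1 else 0) + \<beta> * (if (0::nat) = 1 then 1 else 0) = 0"
      using H[rule_format, of 0] by simp
    moreover have "\<alpha> * (if (1::nat) = 0 then 1 else 0) + \<beta> * (if (1::nat) = 1 then 1 else 0) = 0"
      using H[rule_format, of 1] by simp
    ultimately show "\<alpha> = 0 \<and> \<beta> = 0" by simp
  qed
  have n: "nz 2 (\<lambda>j. if j = 0 then 1 else 0)" "nz 2 (\<lambda>j. if j = 1 then 1 else 0)"
    unfolding nz_def by auto
  have r0: "rk1 2 2 2 (Psi2 2 2 2) (\<lambda>k. if k = 0 then 1 else 0) (\<lambda>i. if i = 0 then 1 else 0) (\<lambda>j. if j = 0 then 1 else 0)"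
    by (rule Psi2_rk1_0) simp
  show ?thesis unfolding Q2_def
    using r0 r1 ind n by blast
qed

definition PhiC :: "nat \<Rightarrow> nat \<Rightarrow> nat \<Rightarrow> tensor3" where
  "PhiC d1 d2 d3 = (\<lambda>i j k. if i < d1 \<and> i < d2 \<and> j = i \<and> k < d3 then (if k = 0 then 1 else of_nat i) else 0)"

lemma PhiC_space: "PhiC d1 d2 d3 \<in> tensor_space d1 d2 d3"
  unfolding tensor_space_def PhiC_def by auto

lemma PhiC_concise:
  assumes "d1 = d2" "d3 = 2" "2 \<le> d2"
  shows "concise d1 d2 d3 (PhiC d1 d2 d3)"
proof -
  have c1: "conc1 d1 d2 d3 (PhiC d1 d2 d3)" unfolding conc1_def
  proof (intro allI impI)
    fix c i0 assume H: "\<forall>j<d2. \<forall>k<d3. (\<Sum>i<d1. c i * PhiC d1 d2 d3 i j k) = 0" and i0: "i0 < d1"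
    have "(\<Sum>i<d1. c i * PhiC d1 d2 d3 i i0 0) = c i0 * PhiC d1 d2 d3 i0 i0 0"
      by (rule sum_single) (use i0 in \<open>auto simp: PhiC_def\<close>)
    also have "\<dots> = c i0" using i0 assms unfolding PhiC_def by auto
    finally show "c i0 = 0" using H i0 assms by auto
  qed
  have c2: "conc2 d1 d2 d3 (PhiC d1 d2 d3)" unfolding conc2_def
  proof (intro allI impI)
    fix c j0 assume H: "\<forall>i<d1. \<forall>k<d3. (\<Sum>j<d2. c j * PhiC d1 d2 d3 i j k) = 0" and j0: "j0 < d2"
    have "(\<Sum>j<d2. c j * PhiC d1 d2 d3 j0 j 0) = c j0 * PhiC d1 d2 d3 j0 j0 0"
      by (rule sum_single) (use j0 in \<open>auto simp: PhiC_def\<close>)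
    also have "\<dots> = c j0" using j0 assms unfolding PhiC_def by auto
    finally show "c j0 = 0" using H j0 assms by auto
  qed
  have c3: "conc3 d1 d2 d3 (PhiC d1 d2 d3)" unfolding conc3_def
  proof (intro allI impI)
    fix c k0 assume H: "\<forall>i<d1. \<forall>j<d2. (\<Sum>k<d3. c k * PhiC d1 d2 d3 i j k) = 0" and k0: "k0 < d3"
    have h0: "(\<Sum>k<d3. c k * PhiC d1 d2 d3 0 0 k) = 0" using H assms by auto
    have h1: "(\<Sum>k<d3. c k * PhiC d1 d2 d3 1 1 k) = 0" using H assms by auto
    have "c 0 = 0" using h0 assms unfolding PhiC_def by (simp add: sum2)
    moreover have "c 0 + c 1 = 0" using h1 assms unfolding PhiC_def by (simp add: sum2)
    ultimately show "c k0 = 0" using k0 assms by (cases k0) auto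
  qed
  show ?thesis unfolding concise_def using c1 c2 c3 by simp
qed

lemma PhiC_not_P3:
  assumes "d1 = d2" "d3 = 2" "3 \<le> d2"
  shows "\<not> P3 d1 d2 d3 (PhiC d1 d2 d3)"
proof
  assume "P3 d1 d2 d3 (PhiC d1 d2 d3)"
  then obtain v a b where a: "nz d1 a" and b: "nz d2 b" and r: "rk1 d1 d2 d3 (PhiC d1 d2 d3) v a b"
    unfolding P3_def by blast
  have cf: "con3 d3 (PhiC d1 d2 d3) v i j = (if j = i then v 0 + of_nat i * v 1 else 0)"
    if "i < d1" "j < d2" for i j
    using that assms unfolding con3_def PhiC_def by (simp add: sum2)
  have R: "a i * b j = (if j = i then v 0 + of_nat i * v 1 else 0)" if "i < d1" "j < d2" for i j
    using r cf[OF that] that unfolding rk1_def by simp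
  obtain i0 where i0: "i0 < d1" "a i0 \<noteq> 0" using a unfolding nz_def by blast
  obtain j0 where j0: "j0 < d2" "b j0 \<noteq> 0" using b unfolding nz_def by blast
  have "j0 = i0"
  proof (rule ccontr)
    assume "j0 \<noteq> i0" thus False using R[OF i0(1) j0(1)] i0 j0 by simp
  qed
  have zero: "v 0 + of_nat i * v 1 = 0" if "i < d1" "i \<noteq> i0" for i
  proof -
    have "a i * b i0 = 0" using R[of i i0] that i0 j0 \<open>j0 = i0\<close> assms by simp
    hence "a i = 0" using j0 \<open>j0 = i0\<close> by simp
    thus ?thesis using R[of i i] that assms by simp
  qed
  define i1 where "i1 = (if i0 = 0 then 1 else (0::nat))"
  define i2 where "i2 = (if i0 = 2 then 1 else (2::nat))"
  have i12: "i1 < d1" "i2 < d1" "i1 \<noteq> i0" "i2 \<noteq> i0" "i1 \<noteq> i2"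
    using assms unfolding i1_def i2_def by auto
  have e1: "v 0 + of_nat i1 * v 1 = 0" using zero i12 by simp
  have e2: "v 0 + of_nat i2 * v 1 = 0" using zero i12 by simp
  have "(of_nat i1 - of_nat i2) * v 1 = (v 0 + of_nat i1 * v 1) - (v 0 + of_nat i2 * v 1)"
    by (simp add: algebra_simps)
  also have "\<dots> = 0" using e1 e2 by simp
  finally have "(of_nat i1 - of_nat i2) * v 1 = 0" .
  moreover have "(of_nat i1 - of_nat i2 :: complex) \<noteq> 0" using i12(5) by simp
  ultimately have v1: "v 1 = 0" by simp
  hence "v 0 = 0" using e1 by simp
  hence "a i0 * b i0 = 0" using R[of i0 i0] i0 assms v1 by simp
  thus False using i0 j0 \<open>j0 = i0\<close> by simp
qed

definition PhiD :: tensor3 where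
  "PhiD = (\<lambda>i j k. if (i = 0 \<and> j = 0 \<and> k = 1) \<or> (i = 0 \<and> j = 1 \<and> k = 0) \<or> (i = 1 \<and> j = 0 \<and> k = 0) then 1 else 0)"

lemma PhiD_space: "PhiD \<in> tensor_space 2 2 2"
  unfolding tensor_space_def PhiD_def by auto

lemma PhiD_concise: "concise 2 2 2 PhiD"
  unfolding concise_def conc1_def conc2_def conc3_def
proof (intro conjI allI impI)
  fix c :: "nat \<Rightarrow> complex" and i :: nat
  assume H: "\<forall>j<2. \<forall>k<2. (\<Sum>i<2. c i * PhiD i j k) = 0" and i: "i < 2"
  from H[rule_format, of 0 1] H[rule_format, of 0 0] have "c 0 = 0" "c 1 = 0"
    by (simp_all add: sum2 PhiD_def)
  thus "c i = 0" using i by (cases i) (auto simp: numeral_2_eq_2 less_Suc_eq)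
next
  fix c :: "nat \<Rightarrow> complex" and j :: nat
  assume H: "\<forall>i<2. \<forall>k<2. (\<Sum>j<2. c j * PhiD i j k) = 0" and j: "j < 2"
  from H[rule_format, of 0 1] H[rule_format, of 0 0] have "c 0 = 0" "c 1 = 0"
    by (simp_all add: sum2 PhiD_def)
  thus "c j = 0" using j by (cases j) (auto simp: numeral_2_eq_2 less_Suc_eq)
next
  fix c :: "nat \<Rightarrow> complex" and k :: nat
  assume H: "\<forall>i<2. \<forall>j<2. (\<Sum>k<2. c k * PhiD i j k) = 0" and k: "k < 2"
  from H[rule_format, of 0 1] H[rule_format, of 0 0] have "c 0 = 0" "c 1 = 0"
    by (simp_all add: sum2 PhiD_def)
  thus "c k = 0" using k by (cases k) (auto simp: numeral_2_eq_2 less_Suc_eq)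
qed

lemma PhiD_rk1_a1:
  assumes "nz 2 b" "rk1 2 2 2 PhiD v a b"
  shows "a 1 = 0"
proof (rule ccontr)
  assume a1: "a 1 \<noteq> 0"
  have R: "\<And>i j. i < 2 \<Longrightarrow> j < 2 \<Longrightarrow> a i * b j = (\<Sum>k<2. PhiD i j k * v k)"
    using assms(2) unfolding rk1_def con3_def by simp
  have r11: "a 1 * b 1 = 0" using R[of 1 1] by (simp add: sum2 PhiD_def)
  have r01: "a 0 * b 1 = v 0" using R[of 0 1] by (simp add: sum2 PhiD_def)
  have r10: "a 1 * b 0 = v 0" using R[of 1 0] by (simp add: sum2 PhiD_def)
  have "b 1 = 0" using r11 a1 by simp
  hence "v 0 = 0" using r01 by simp
  hence "b 0 = 0" using r10 a1 by simp
  with \<open>b 1 = 0\<close> assms(1) show False unfolding nz_def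
    by (auto simp: numeral_2_eq_2 less_Suc_eq)
qed

lemma PhiD_not_Q2: "\<not> Q2 2 2 2 PhiD"
proof
  assume "Q2 2 2 2 PhiD"
  then obtain v a b v' a' b' where h: "nz 2 b" "nz 2 b'" "indep 2 a a'" "rk1 2 2 2 PhiD v a b"
      "rk1 2 2 2 PhiD v' a' b'" unfolding Q2_def by blast
  have a1: "a 1 = 0" "a' 1 = 0" using PhiD_rk1_a1[OF h(1) h(4)] PhiD_rk1_a1[OF h(2) h(5)] by auto
  have lt2: "\<And>i::nat. i < 2 \<longleftrightarrow> i = 0 \<or> i = 1" by auto
  show False
  proof (cases "a 0 = 0")
    case True
    have "\<forall>i<2. 1 * a i + 0 * a' i = 0" using True a1 lt2 by auto
    from h(3)[unfolded indep_def, rule_format, OF this[rule_format]] show False by simp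
  next
    case False
    have "\<forall>i<2. a' 0 * a i + (- a 0) * a' i = 0" using a1 lt2 by auto
    from h(3)[unfolded indep_def, rule_format, OF this[rule_format]] have "- a 0 = 0" by simp
    thus False using False by simp
  qed
qed


theorem mainTheorem5:
  fixes d1 d2 d3 :: nat
  assumes "d1 \<ge> d2" and "d2 \<ge> d3" and "d3 \<ge> 2"
    and "int (d2 * d3) - int d1 > 1"
  shows "\<exists>\<Phi> \<Psi>. \<Phi> \<in> tensor_space d1 d2 d3 \<and> \<Psi> \<in> tensor_space d1 d2 d3 \<and>
           \<Phi> \<noteq> (\<lambda>_ _ _. 0) \<and> \<Psi> \<noteq> (\<lambda>_ _ _. 0) \<and>
           slocc_maximal d1 d2 d3 \<Phi> \<and> slocc_maximal d1 d2 d3 \<Psi> \<and>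
           \<not> slocc_le d1 d2 d3 \<Phi> \<Psi> \<and> \<not> slocc_le d1 d2 d3 \<Psi> \<Phi>"
proof -
  have lt: "d1 + 2 \<le> d2 * d3" using assms(4) by linarith
  have p1: "0 < d1" and p2: "0 < d2" and p3: "0 < d3" using assms by auto
  show ?thesis
  proof (cases "d2 + d3 - 1 \<le> d1")
    case True
    show ?thesis
    proof (rule generic[where I = "PU d1 d2 d3"])
      show "0 < d1" by (rule p1)
      show "PhiA d1 d2 d3 \<in> tensor_space d1 d2 d3" by (rule PhiA_space)
      show "Psi1 d1 d2 d3 \<in> tensor_space d1 d2 d3" by (rule Psi1_space[OF p2 p3])
      show "concise d1 d2 d3 (PhiA d1 d2 d3)" by (rule PhiA_concise) (use assms True lt in auto)
      show "concise d1 d2 d3 (Psi1 d1 d2 d3)" by (rule Psi1_concise) (use assms lt in auto)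
      show "PU d1 d2 d3 (Psi1 d1 d2 d3)" by (rule Psi1_PU) (use assms lt in auto)
      show "\<not> PU d1 d2 d3 (PhiA d1 d2 d3)" by (rule PhiA_not_PU[OF True])
    qed (simp_all add: PU_t1 PU_t2 PU_t3)
  next
    case False
    hence le: "d1 \<le> d2 + d3 - 2" by linarith
    show ?thesis
    proof (cases "3 \<le> d3")
      case True
      show ?thesis
      proof (rule generic[where I = "PW d1 d2 d3"])
        show "0 < d1" by (rule p1)
        show "PhiB d1 d2 d3 \<in> tensor_space d1 d2 d3" by (rule PhiB_space) (use assms in auto)
        show "Psi1 d1 d2 d3 \<in> tensor_space d1 d2 d3" by (rule Psi1_space[OF p2 p3])
        show "concise d1 d2 d3 (PhiB d1 d2 d3)" by (rule PhiB_concise) (use assms True le in auto)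
        show "concise d1 d2 d3 (Psi1 d1 d2 d3)" by (rule Psi1_concise) (use assms lt in auto)
        show "PW d1 d2 d3 (Psi1 d1 d2 d3)" by (rule Psi1_PW[OF p1 p2 p3])
        show "\<not> PW d1 d2 d3 (PhiB d1 d2 d3)" by (rule PhiB_not_PW) (use assms in auto)
      qed (simp_all add: PW_t1 PW_t2 PW_t3)
    next
      case False
      hence d3: "d3 = 2" using assms by simp
      hence d12: "d1 = d2" using le assms by simp
      show ?thesis
      proof (cases "3 \<le> d2")
        case True
        show ?thesis
        proof (rule generic[where I = "P3 d1 d2 d3"])
          show "0 < d1" by (rule p1)
          show "PhiC d1 d2 d3 \<in> tensor_space d1 d2 d3" by (rule PhiC_space)
          show "Psi2 d1 d2 d3 \<in> tensor_space d1 d2 d3" by (rule Psi2_space) (use d3 in simp)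
          show "concise d1 d2 d3 (PhiC d1 d2 d3)" by (rule PhiC_concise) (use d3 d12 True in auto)
          show "concise d1 d2 d3 (Psi2 d1 d2 d3)" by (rule Psi2_concise) (use d3 d12 True in auto)
          show "P3 d1 d2 d3 (Psi2 d1 d2 d3)" by (rule Psi2_P3[OF p1 p2 p3])
          show "\<not> P3 d1 d2 d3 (PhiC d1 d2 d3)" by (rule PhiC_not_P3) (use d3 d12 True in auto)
        qed (simp_all add: P3_t1 P3_t2 P3_t3)
      next
        case False
        hence dd: "d1 = 2" "d2 = 2" "d3 = 2" using d3 d12 assms by auto
        have "\<exists>\<Phi> \<Psi>. \<Phi> \<in> tensor_space 2 2 2 \<and> \<Psi> \<in> tensor_space 2 2 2 \<and>
           \<Phi> \<noteq> (\<lambda>_ _ _. 0) \<and> \<Psi> \<noteq> (\<lambda>_ _ _. 0) \<and>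
           slocc_maximal 2 2 2 \<Phi> \<and> slocc_maximal 2 2 2 \<Psi> \<and>
           \<not> slocc_le 2 2 2 \<Phi> \<Psi> \<and> \<not> slocc_le 2 2 2 \<Psi> \<Phi>"
        proof (rule generic[where I = "Q2 2 2 2"])
          show "(0::nat) < 2" by simp
          show "PhiD \<in> tensor_space 2 2 2" by (rule PhiD_space)
          show "Psi2 2 2 2 \<in> tensor_space 2 2 2" by (rule Psi2_space) simp
          show "concise 2 2 2 PhiD" by (rule PhiD_concise)
          show "concise 2 2 2 (Psi2 2 2 2)" by (rule Psi2_concise) auto
          show "Q2 2 2 2 (Psi2 2 2 2)" by (rule Psi2_Q2)
          show "\<not> Q2 2 2 2 PhiD" by (rule PhiD_not_Q2)
        qed (simp_all add: Q2_t1 Q2_t2 Q2_t3)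
        thus ?thesis using dd by simp
      qed
    qed
  qed
qed

end
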